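(* Let $N$ be a finite set, $r\notin N$, $V=N\cup\{r\}$, and let $G=(V,E)$ be the complete graph on $V$ with edge weights $w:E\to\mathbb{R}$ taking the distinct values $w_1<\dots<w_k$. Assume that for every $i<k$ there is no violated cycle in $G_i$, and that $f_{xy}(\hat N(xy))\ge 0$ for every candidate edge $xy$. Let $uv$ be a candidate edge and $S\in\mathcal{S}_{uv}$ with $S\subseteq\hat N(uv)$. Then for every $s\in S\setminus\{r\}$, $f_{uv}(S)\le f_{uv}(S\setminus\{s\})$.
   Context: For $S\subseteq V$, $\mathrm{mst}(S)$ is the weight of a minimum spanning tree of $G[S]$. For distinct $u,v\in N$, $\mathcal{S}_{uv}=\{S\subseteq V: r\in S,\ u,v\notin S\}$ and $f_{uv}(S)=\mathrm{mst}(S\cup\{u\})+\mathrm{mst}(S\cup\{v\})-\mathrm{mst}(S)-\mathrm{mst}(S\cup\{u,v\})$. $\hat N(uv)$ is the set of vertices $s\in V\setminus\{u,v\}$ with $\max\{w(su),w(sv)\}>w(uv)$. An edge $uv$ is a candidate edge if $r\in\hat N(uv)$ (so $u,v\in N$). $E_i=\{e\in E:w(e)\le w_i\}$, $G_i=(V,E_i)$. For a cycle $C$ in $G_i$ and a chord $f=xy$ of $C$ in $G_i$, with $P_1,P_2$ the two $x$-$y$ paths of $C$, $f$ covers $C$ if $w(f)\ge w(e)$ for all $e\in E(P_1)$ or for all $e\in E(P_2)$; $C$ is well-covered if covered by all its chords. A violated cycle in $G_i$ is a well-covered cycle of $G_i$ containing two vertices non-adjacent in $G_i$ and a vertex $x\ne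 r$ with $rx\notin E_i$. *)

theory Defs
  imports Complex_Main
begin

text \<open>Complete graph on a vertex set V; edges are two-element sets;
  edge weights are given by w :: 'a set \<Rightarrow> real (only its values on edges matter).\<close>

definition cedges :: "'a set \<Rightarrow> 'a set set" where
  "cedges S = {{x, y} | x y. x \<in> S \<and> y \<in> S \<and> x \<noteq> y}"

definition is_spanning_tree :: "'a set \<Rightarrow> 'a set set \<Rightarrow> bool" where
  "is_spanning_tree S T \<longleftrightarrow>
     T \<subseteq> cedges S \<and> card T = card S - 1 \<and>
     (\<forall>x\<in>S. \<forall>y\<in>S. (x, y) \<in> {(a, b). {a, b} \<in> T}\<^sup>*)"

definition mst :: "('a set \<Rightarrow> real) \<Rightarrow> 'a set \<Rightarrow> real" where
  "mst w S = Min ((\<lambda>T. \<Sum>e\<in>T. w e) ` {T. is_spanning_tree S T})"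

definition f_uv :: "('a set \<Rightarrow> real) \<Rightarrow> 'a \<Rightarrow> 'a \<Rightarrow> 'a set \<Rightarrow> real" where
  "f_uv w u v S = mst w (insert u S) + mst w (insert v S) - mst w S - mst w (insert u (insert v S))"

definition Nhat :: "'a set \<Rightarrow> ('a set \<Rightarrow> real) \<Rightarrow> 'a \<Rightarrow> 'a \<Rightarrow> 'a set" where
  "Nhat V w u v = {s \<in> V - {u, v}. max (w {s, u}) (w {s, v}) > w {u, v}}"

definition candidate_edge :: "'a set \<Rightarrow> 'a \<Rightarrow> ('a set \<Rightarrow> real) \<Rightarrow> 'a \<Rightarrow> 'a \<Rightarrow> bool" where
  "candidate_edge N r w u v \<longleftrightarrow> u \<in> N \<and> v \<in> N \<and> u \<noteq> v \<and> r \<in> Nhat (insert r N) w u v"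

definition in_Gt :: "'a set \<Rightarrow> ('a set \<Rightarrow> real) \<Rightarrow> real \<Rightarrow> 'a set \<Rightarrow> bool" where
  "in_Gt V w t e \<longleftrightarrow> e \<in> cedges V \<and> w e \<le> t"

definition cyc_edge :: "'a list \<Rightarrow> nat \<Rightarrow> 'a set" where
  "cyc_edge cs j = {cs ! j, cs ! ((j + 1) mod length cs)}"

definition is_cycle_Gt :: "'a set \<Rightarrow> ('a set \<Rightarrow> real) \<Rightarrow> real \<Rightarrow> 'a list \<Rightarrow> bool" where
  "is_cycle_Gt V w t cs \<longleftrightarrow> distinct cs \<and> length cs \<ge> 3 \<and>
     (\<forall>j < length cs. in_Gt V w t (cyc_edge cs j))"

text \<open>The two paths between c_a and c_b are
  formed by cycle edges with index in [a,b) and the remaining ones.\<close>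
definition is_chord_Gt :: "'a set \<Rightarrow> ('a set \<Rightarrow> real) \<Rightarrow> real \<Rightarrow> 'a list \<Rightarrow> nat \<Rightarrow> nat \<Rightarrow> bool" where
  "is_chord_Gt V w t cs a b \<longleftrightarrow> a < b \<and> b < length cs \<and>
     in_Gt V w t {cs ! a, cs ! b} \<and> {cs ! a, cs ! b} \<notin> cyc_edge cs ` {..<length cs}"

definition covers :: "('a set \<Rightarrow> real) \<Rightarrow> 'a list \<Rightarrow> nat \<Rightarrow> nat \<Rightarrow> bool" where
  "covers w cs a b \<longleftrightarrow>
     (\<forall>j. a \<le> j \<and> j < b \<longrightarrow> w {cs ! a, cs ! b} \<ge> w (cyc_edge cs j)) \<or>
     (\<forall>j. j < length cs \<and> \<not> (a \<le> j \<and> j < b) \<longrightarrow> w {cs ! a, cs ! b} \<ge> w (cyc_edge cs j))"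

definition well_covered_Gt :: "'a set \<Rightarrow> ('a set \<Rightarrow> real) \<Rightarrow> real \<Rightarrow> 'a list \<Rightarrow> bool" where
  "well_covered_Gt V w t cs \<longleftrightarrow> is_cycle_Gt V w t cs \<and>
     (\<forall>a b. is_chord_Gt V w t cs a b \<longrightarrow> covers w cs a b)"

definition violated_cycle_Gt :: "'a set \<Rightarrow> 'a \<Rightarrow> ('a set \<Rightarrow> real) \<Rightarrow> real \<Rightarrow> 'a list \<Rightarrow> bool" where
  "violated_cycle_Gt V r w t cs \<longleftrightarrow> well_covered_Gt V w t cs \<and>
     (\<exists>y\<in>set cs. \<exists>z\<in>set cs. y \<noteq> z \<and> \<not> in_Gt V w t {y, z}) \<and>
     (\<exists>x\<in>set cs. x \<noteq> r \<and> \<not> in_Gt V w t {r, x})"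

end

theory Submission
  imports Defs
begin

definition cl :: "('a \<times> 'a) set \<Rightarrow> 'a \<Rightarrow> 'a set" where
  "cl R a = {b. (a,b) \<in> R\<^sup>*}"

definition PP :: "('a \<times> 'a) set \<Rightarrow> 'a set \<Rightarrow> 'a set set" where
  "PP R X = cl R ` X"

lemma rt_clique:
  "(R \<union> Y \<times> Y)\<^sup>* = R\<^sup>* \<union> {(p,q). (\<exists>y\<in>Y. (p,y)\<in>R\<^sup>*) \<and> (\<exists>y\<in>Y. (y,q)\<in>R\<^sup>*)}"
proof
  show "(R \<union> Y \<times> Y)\<^sup>* \<subseteq> R\<^sup>* \<union> {(p,q). (\<exists>y\<in>Y. (p,y)\<in>R\<^sup>*) \<and> (\<exists>y\<in>Y. (y,q)\<in>R\<^sup>*)}"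
  proof
    fix z assume "z \<in> (R \<union> Y \<times> Y)\<^sup>*"
    then obtain p q where z: "z = (p,q)" and pq: "(p,q) \<in> (R \<union> Y \<times> Y)\<^sup>*" by (cases z) auto
    from pq have "(p,q) \<in> R\<^sup>* \<union> {(p,q). (\<exists>y\<in>Y. (p,y)\<in>R\<^sup>*) \<and> (\<exists>y\<in>Y. (y,q)\<in>R\<^sup>*)}"
    proof (induction rule: rtrancl_induct)
      case base then show ?case by simp
    next
      case (step b c)
      from step.hyps(2) show ?case
      proof
        assume bc: "(b,c) \<in> R"
        from step.IH show ?thesis
        proof
          assume "(p,b) \<in> R\<^sup>*" then show ?thesis using bc by (auto intro: rtrancl_into_rtrancl)
        next
          assume "(p,b) \<in> {(p,q). (\<exists>y\<in>Y. (p,y)\<in>R\<^sup>*) \<and> (\<exists>y\<in>Y. (y,q)\<in>R\<^sup>*)}"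
          then show ?thesis using bc by (auto intro: rtrancl_into_rtrancl)
        qed
      next
        assume bc: "(b,c) \<in> Y \<times> Y"
        from step.IH show ?thesis
        proof
          assume "(p,b) \<in> R\<^sup>*" then show ?thesis using bc by auto
        next
          assume "(p,b) \<in> {(p,q). (\<exists>y\<in>Y. (p,y)\<in>R\<^sup>*) \<and> (\<exists>y\<in>Y. (y,q)\<in>R\<^sup>*)}"
          then show ?thesis using bc by auto
        qed
      qed
    qed
    then show "z \<in> R\<^sup>* \<union> {(p,q). (\<exists>y\<in>Y. (p,y)\<in>R\<^sup>*) \<and> (\<exists>y\<in>Y. (y,q)\<in>R\<^sup>*)}" using z by simp
  qed
next
  have sub: "R\<^sup>* \<subseteq> (R \<union> Y \<times> Y)\<^sup>*" by (rule rtrancl_mono) auto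
  show "R\<^sup>* \<union> {(p,q). (\<exists>y\<in>Y. (p,y)\<in>R\<^sup>*) \<and> (\<exists>y\<in>Y. (y,q)\<in>R\<^sup>*)} \<subseteq> (R \<union> Y \<times> Y)\<^sup>*"
  proof
    fix z assume "z \<in> R\<^sup>* \<union> {(p,q). (\<exists>y\<in>Y. (p,y)\<in>R\<^sup>*) \<and> (\<exists>y\<in>Y. (y,q)\<in>R\<^sup>*)}"
    then show "z \<in> (R \<union> Y \<times> Y)\<^sup>*"
    proof
      assume "z \<in> R\<^sup>*" then show ?thesis using sub by auto
    next
      assume "z \<in> {(p,q). (\<exists>y\<in>Y. (p,y)\<in>R\<^sup>*) \<and> (\<exists>y\<in>Y. (y,q)\<in>R\<^sup>*)}"
      then obtain p q y1 y2 where z: "z = (p,q)" and "y1 \<in> Y" "y2 \<in> Y"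
        and "(p,y1) \<in> R\<^sup>*" "(y2,q) \<in> R\<^sup>*" by auto
      then have "(p,y1) \<in> (R \<union> Y \<times> Y)\<^sup>*" "(y2,q) \<in> (R \<union> Y \<times> Y)\<^sup>*" "(y1,y2) \<in> (R \<union> Y \<times> Y)\<^sup>*"
        using sub by auto
      then show ?thesis using z by (meson rtrancl_trans)
    qed
  qed
qed

lemma cl_mem: "a \<in> cl R a" by (simp add: cl_def)

lemma cl_sub: "R \<subseteq> X \<times> X \<Longrightarrow> a \<in> X \<Longrightarrow> cl R a \<subseteq> X"
proof
  fix b assume RX: "R \<subseteq> X \<times> X" and a: "a \<in> X" and "b \<in> cl R a"
  then have "(a,b) \<in> R\<^sup>*" by (simp add: cl_def)
  then show "b \<in> X" using a RX by (induction rule: rtrancl_induct) auto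
qed

lemma cl_eq: "sym R \<Longrightarrow> b \<in> cl R a \<Longrightarrow> cl R b = cl R a"
proof -
  assume s: "sym R" and b: "b \<in> cl R a"
  have ab: "(a,b) \<in> R\<^sup>*" using b by (simp add: cl_def)
  have ba: "(b,a) \<in> R\<^sup>*" using ab s by (meson sym_rtrancl symD)
  show ?thesis unfolding cl_def using ab ba by (meson rtrancl_trans)
qed

lemma cl_eq_iff: "sym R \<Longrightarrow> (cl R a = cl R b) \<longleftrightarrow> (a,b) \<in> R\<^sup>*"
  by (metis cl_def cl_eq cl_mem mem_Collect_eq)

lemma cl_sym: "sym R \<Longrightarrow> b \<in> cl R a \<Longrightarrow> a \<in> cl R b"
  by (metis cl_eq cl_mem)

lemma PP_cong: "R\<^sup>* = R'\<^sup>* \<Longrightarrow> PP R X = PP R' X"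
  by (simp add: PP_def cl_def)

lemma PP_finite: "finite X \<Longrightarrow> finite (PP R X)"
  by (simp add: PP_def)

lemma PP_clique:
  assumes s: "sym R" and RX: "R \<subseteq> X \<times> X" and YX: "Y \<subseteq> X" and Yne: "Y \<noteq> {}"
  defines "A \<equiv> {C \<in> PP R X. C \<inter> Y \<noteq> {}}"
  shows "PP (R \<union> Y \<times> Y) X = (PP R X - A) \<union> {\<Union>A}"
proof -
  define U where "U = {q. \<exists>y\<in>Y. (y,q) \<in> R\<^sup>*}"
  have UA: "\<Union>A = U"
  proof
    show "\<Union>A \<subseteq> U"
    proof
      fix q assume "q \<in> \<Union>A"
      then obtain a y where a: "a \<in> X" "q \<in> cl R a" "y \<in> cl R a" "y \<in> Y"
        unfolding A_def PP_def by auto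
      then have "cl R y = cl R a" using cl_eq s by metis
      then have "q \<in> cl R y" using a by simp
      then show "q \<in> U" using a unfolding U_def cl_def by auto
    qed
  next
    show "U \<subseteq> \<Union>A"
    proof
      fix q assume "q \<in> U"
      then obtain y where y: "y \<in> Y" "(y,q) \<in> R\<^sup>*" unfolding U_def by auto
      then have "cl R y \<in> A" unfolding A_def PP_def using YX cl_mem by fastforce
      moreover have "q \<in> cl R y" using y by (simp add: cl_def)
      ultimately show "q \<in> \<Union>A" by auto
    qed
  qed
  have clnew: "cl (R \<union> Y \<times> Y) a = (if cl R a \<inter> Y \<noteq> {} then U else cl R a)" if "a \<in> X" for a
  proof (cases "cl R a \<inter> Y \<noteq> {}")
    case True
    then obtain y0 where y0: "y0 \<in> Y" "(a,y0) \<in> R\<^sup>*" by (auto simp: cl_def)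
    have "cl (R \<union> Y \<times> Y) a = U"
      unfolding cl_def rt_clique U_def
    proof (auto)
      fix q assume "(a,q) \<in> R\<^sup>*"
      have "(y0,a) \<in> R\<^sup>*" using y0 s by (meson sym_rtrancl symD)
      then show "\<exists>y\<in>Y. (y,q) \<in> R\<^sup>*" using y0 \<open>(a,q) \<in> R\<^sup>*\<close> by (meson rtrancl_trans)
    next
      fix q y assume "y \<in> Y" "(y,q) \<in> R\<^sup>*"
      then show "\<exists>y\<in>Y. (a,y) \<in> R\<^sup>*" using y0 by auto
    qed
    then show ?thesis using True by simp
  next
    case False
    then have "\<not>(\<exists>y\<in>Y. (a,y) \<in> R\<^sup>*)" by (auto simp: cl_def)
    then have "cl (R \<union> Y \<times> Y) a = cl R a" unfolding cl_def rt_clique by auto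
    then show ?thesis using False by simp
  qed
  have "PP (R \<union> Y \<times> Y) X = (\<lambda>a. if cl R a \<inter> Y \<noteq> {} then U else cl R a) ` X"
    unfolding PP_def using clnew by auto
  also have "\<dots> = (PP R X - A) \<union> {U}"
  proof
    show "(\<lambda>a. if cl R a \<inter> Y \<noteq> {} then U else cl R a) ` X \<subseteq> (PP R X - A) \<union> {U}"
      unfolding A_def PP_def by auto
  next
    obtain y where y: "y \<in> Y" using Yne by auto
    then have "y \<in> X" "cl R y \<inter> Y \<noteq> {}" using YX cl_mem[of y R] by auto
    then have "U \<in> (\<lambda>a. if cl R a \<inter> Y \<noteq> {} then U else cl R a) ` X" by force
    moreover have "PP R X - A \<subseteq> (\<lambda>a. if cl R a \<inter> Y \<noteq> {} then U else cl R a) ` X"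
      unfolding A_def PP_def by auto
    ultimately show "(PP R X - A) \<union> {U} \<subseteq> (\<lambda>a. if cl R a \<inter> Y \<noteq> {} then U else cl R a) ` X"
      by auto
  qed
  finally show ?thesis using UA by simp
qed

lemma card_PP_clique:
  assumes s: "sym R" and RX: "R \<subseteq> X \<times> X" and YX: "Y \<subseteq> X" and Yne: "Y \<noteq> {}" and fin: "finite X"
  defines "A \<equiv> {C \<in> PP R X. C \<inter> Y \<noteq> {}}"
  shows "card (PP (R \<union> Y \<times> Y) X) + card A = card (PP R X) + 1"
    and "card A \<ge> 1"
proof -
  have eq: "PP (R \<union> Y \<times> Y) X = (PP R X - A) \<union> {\<Union>A}"
    using PP_clique[OF s RX YX Yne] unfolding A_def by simp
  obtain y where y: "y \<in> Y" using Yne by auto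
  then have "cl R y \<in> A" unfolding A_def PP_def using YX cl_mem by fastforce
  then have Ane: "A \<noteq> {}" by auto
  have notin: "\<Union>A \<notin> PP R X - A"
  proof
    assume "\<Union>A \<in> PP R X - A"
    then have "\<Union>A \<inter> Y = {}" unfolding A_def by auto
    moreover have "cl R y \<subseteq> \<Union>A" using \<open>cl R y \<in> A\<close> by auto
    ultimately show False using y cl_mem[of y R] by auto
  qed
  have finA: "finite A" unfolding A_def using PP_finite[OF fin] by simp
  have AP: "A \<subseteq> PP R X" unfolding A_def by auto
  have "card (PP (R \<union> Y \<times> Y) X) = card (PP R X - A) + 1"
    using eq notin PP_finite[OF fin] by simp
  moreover have "card (PP R X - A) + card A = card (PP R X)"
    using card_Diff_subset[OF finA AP] card_mono[OF PP_finite[OF fin] AP] by simp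
  ultimately show "card (PP (R \<union> Y \<times> Y) X) + card A = card (PP R X) + 1" by simp
  show "card A \<ge> 1" using Ane finA by (simp add: Suc_leI card_gt_0_iff)
qed

definition adjw :: "('a set \<Rightarrow> real) \<Rightarrow> real \<Rightarrow> 'a \<Rightarrow> 'a \<Rightarrow> bool" where
  "adjw w t a b \<longleftrightarrow> a \<noteq> b \<and> w {a,b} \<le> t"

definition RL :: "('a set \<Rightarrow> real) \<Rightarrow> real \<Rightarrow> 'a set \<Rightarrow> ('a \<times> 'a) set" where
  "RL w t X = {(a,b). a \<in> X \<and> b \<in> X \<and> adjw w t a b}"

definition KK :: "('a set \<Rightarrow> real) \<Rightarrow> real \<Rightarrow> 'a set \<Rightarrow> nat" where
  "KK w t X = card (PP (RL w t X) X)"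

definition Acl :: "('a set \<Rightarrow> real) \<Rightarrow> real \<Rightarrow> 'a set \<Rightarrow> 'a \<Rightarrow> 'a set set" where
  "Acl w t X x = {C \<in> PP (RL w t X) X. \<exists>c\<in>C. adjw w t x c}"

lemma adjw_sym: "adjw w t a b = adjw w t b a"
  unfolding adjw_def by (auto simp: insert_commute)

lemma RL_sym: "sym (RL w t X)"
  unfolding RL_def sym_def using adjw_sym by fast

lemma RL_sub: "RL w t X \<subseteq> X \<times> X"
  unfolding RL_def by auto

lemma PP_RL_sub: "C \<in> PP (RL w t X) X \<Longrightarrow> C \<subseteq> X"
proof -
  assume "C \<in> PP (RL w t X) X"
  then obtain a where "a \<in> X" "C = cl (RL w t X) a" unfolding PP_def by auto
  then show ?thesis using cl_sub[OF RL_sub] by simp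
qed

lemma rtrancl_eqI: "A \<subseteq> B\<^sup>* \<Longrightarrow> B \<subseteq> A\<^sup>* \<Longrightarrow> A\<^sup>* = B\<^sup>*"
  by (rule subset_antisym; rule rtrancl_subset_rtrancl)

lemma cl_isolated:
  assumes "R \<subseteq> X \<times> X" "x \<notin> X"
  shows "cl R x = {x}"
proof -
  have "(x,b) \<in> R\<^sup>* \<Longrightarrow> b = x" for b
    by (induction rule: rtrancl_induct) (use assms in auto)
  then show ?thesis unfolding cl_def by auto
qed

lemma PP_vertex:
  assumes fin: "finite X" and x: "x \<notin> X"
  shows "PP (RL w t (insert x X)) (insert x X) =
           (PP (RL w t X) X - Acl w t X x) \<union> {insert x (\<Union>(Acl w t X x))}"
proof -
  define R0 where "R0 = RL w t X"
  define Y where "Y = insert x {c \<in> X. adjw w t x c}"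
  define X' where "X' = insert x X"
  have s0: "sym R0" unfolding R0_def by (rule RL_sym)
  have R0X': "R0 \<subseteq> X' \<times> X'" unfolding R0_def X'_def RL_def by auto
  have YX': "Y \<subseteq> X'" unfolding Y_def X'_def by auto
  have Yne: "Y \<noteq> {}" unfolding Y_def by auto
  have rteq: "(R0 \<union> Y \<times> Y)\<^sup>* = (RL w t X')\<^sup>*"
  proof (rule rtrancl_eqI)
    show "R0 \<union> Y \<times> Y \<subseteq> (RL w t X')\<^sup>*"
    proof
      fix z assume z: "z \<in> R0 \<union> Y \<times> Y"
      show "z \<in> (RL w t X')\<^sup>*"
      proof (cases "z \<in> R0")
        case True
        then show ?thesis unfolding R0_def RL_def X'_def by auto
      next
        case False
        then obtain a b where ab: "z = (a,b)" "a \<in> Y" "b \<in> Y" using z by auto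
        have ax: "a = x \<or> (a,x) \<in> RL w t X'" using ab(2) x unfolding Y_def RL_def X'_def
          using adjw_sym by fastforce
        have xb: "b = x \<or> (x,b) \<in> RL w t X'" using ab(3) x unfolding Y_def RL_def X'_def
          by fastforce
        from ax xb show ?thesis using ab(1) by auto
      qed
    qed
  next
    show "RL w t X' \<subseteq> (R0 \<union> Y \<times> Y)\<^sup>*"
    proof
      fix z assume z: "z \<in> RL w t X'"
      then obtain a b where ab: "z = (a,b)" "a \<in> X'" "b \<in> X'" "adjw w t a b"
        unfolding RL_def by auto
      show "z \<in> (R0 \<union> Y \<times> Y)\<^sup>*"
      proof (cases "a = x \<or> b = x")
        case True
        then have "a \<in> Y \<and> b \<in> Y" using ab adjw_sym[of w t a b] unfolding Y_def X'_def
          by (auto simp: adjw_def)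
        then show ?thesis using ab(1) by auto
      next
        case False
        then have "z \<in> R0" using ab unfolding R0_def RL_def X'_def by auto
        then show ?thesis by auto
      qed
    qed
  qed
  have PP0: "PP R0 X' = insert {x} (PP R0 X)"
  proof -
    have "cl R0 x = {x}" using cl_isolated[of R0 X x] x unfolding R0_def RL_def by auto
    then show ?thesis unfolding PP_def X'_def by simp
  qed
  define A where "A = {C \<in> PP R0 X'. C \<inter> Y \<noteq> {}}"
  have AA: "A = insert {x} (Acl w t X x)"
  proof -
    have "C \<inter> Y \<noteq> {} \<longleftrightarrow> (\<exists>c\<in>C. adjw w t x c)" if "C \<in> PP R0 X" for C
    proof -
      have "C \<subseteq> X" using that PP_RL_sub unfolding R0_def by blast
      then show ?thesis unfolding Y_def using x by auto
    qed
    then have "{C \<in> PP R0 X. C \<inter> Y \<noteq> {}} = {C \<in> PP R0 X. \<exists>c\<in>C. adjw w t x c}" by blast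
    moreover have "{x} \<inter> Y \<noteq> {}" unfolding Y_def by auto
    ultimately have "A = insert {x} {C \<in> PP R0 X. \<exists>c\<in>C. adjw w t x c}"
      unfolding A_def PP0 by auto
    then show ?thesis unfolding Acl_def R0_def .
  qed
  have xnot: "{x} \<notin> PP R0 X" using PP_RL_sub[of "{x}" w t X] x unfolding R0_def by blast
  have "PP (RL w t X') X' = PP (R0 \<union> Y \<times> Y) X'" using PP_cong[OF rteq] by simp
  also have "\<dots> = (PP R0 X' - A) \<union> {\<Union>A}"
    using PP_clique[OF s0 R0X' YX' Yne] unfolding A_def by simp
  also have "PP R0 X' - A = PP R0 X - Acl w t X x"
    unfolding PP0 AA using xnot by auto
  also have "PP R0 X = PP (RL w t X) X" unfolding R0_def ..
  also have "\<Union>A = insert x (\<Union>(Acl w t X x))" unfolding AA by auto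
  finally show ?thesis unfolding X'_def .
qed

lemma Acl_sub: "Acl w t X x \<subseteq> PP (RL w t X) X" unfolding Acl_def by auto

lemma Acl_finite: "finite X \<Longrightarrow> finite (Acl w t X x)"
  by (rule finite_subset[OF Acl_sub], rule PP_finite)

lemma newblock_notin:
  assumes "x \<notin> X"
  shows "insert x B \<notin> PP (RL w t X) X"
proof
  assume "insert x B \<in> PP (RL w t X) X"
  then have "insert x B \<subseteq> X" by (rule PP_RL_sub)
  then show False using assms by simp
qed

lemma KK_vertex:
  assumes fin: "finite X" and x: "x \<notin> X"
  shows "int (KK w t (insert x X)) = int (KK w t X) + 1 - int (card (Acl w t X x))"
proof -
  have fP: "finite (PP (RL w t X) X)" using PP_finite[OF fin] .
  have "card (PP (RL w t (insert x X)) (insert x X)) =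
        card (PP (RL w t X) X - Acl w t X x) + 1"
    unfolding PP_vertex[OF fin x] using newblock_notin[OF x] fP by simp
  moreover have "card (PP (RL w t X) X - Acl w t X x) = card (PP (RL w t X) X) - card (Acl w t X x)"
    using card_Diff_subset[OF Acl_finite[OF fin] Acl_sub] .
  moreover have "card (Acl w t X x) \<le> card (PP (RL w t X) X)"
    using card_mono[OF fP Acl_sub] .
  ultimately show ?thesis unfolding KK_def by simp
qed

lemma Acl_insert:
  assumes fin: "finite X" and x: "x \<notin> X" and z: "z \<notin> X" "z \<noteq> x"
  shows "Acl w t (insert x X) z = (Acl w t X z - Acl w t X x) \<union>
           (if adjw w t z x \<or> (\<exists>C\<in>Acl w t X x. \<exists>c\<in>C. adjw w t z c)
            then {insert x (\<Union>(Acl w t X x))} else {})"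
proof -
  have "Acl w t (insert x X) z = {C \<in> (PP (RL w t X) X - Acl w t X x) \<union> {insert x (\<Union>(Acl w t X x))}.
          \<exists>c\<in>C. adjw w t z c}"
    unfolding Acl_def PP_vertex[OF fin x] by simp
  also have "\<dots> = (Acl w t X z - Acl w t X x) \<union>
           (if adjw w t z x \<or> (\<exists>C\<in>Acl w t X x. \<exists>c\<in>C. adjw w t z c)
            then {insert x (\<Union>(Acl w t X x))} else {})"
  proof -
    define P where "P = PP (RL w t X) X"
    define Ax where "Ax = Acl w t X x"
    define B where "B = insert x (\<Union>Ax)"
    have e1: "{C \<in> (P - Ax) \<union> {B}. \<exists>c\<in>C. adjw w t z c} =
              {C \<in> P - Ax. \<exists>c\<in>C. adjw w t z c} \<union> (if \<exists>c\<in>B. adjw w t z c then {B} else {})"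
      by auto
    have e2: "{C \<in> P - Ax. \<exists>c\<in>C. adjw w t z c} = Acl w t X z - Ax"
      unfolding Acl_def P_def by auto
    have e3: "(\<exists>c\<in>B. adjw w t z c) \<longleftrightarrow> adjw w t z x \<or> (\<exists>C\<in>Ax. \<exists>c\<in>C. adjw w t z c)"
      unfolding B_def by auto
    show ?thesis using e1 e2 e3 unfolding P_def Ax_def B_def by simp
  qed
  finally show ?thesis .
qed

definition MM :: "('a set \<Rightarrow> real) \<Rightarrow> real \<Rightarrow> 'a set \<Rightarrow> 'a \<Rightarrow> 'a \<Rightarrow> 'a set set" where
  "MM w t X u v = Acl w t X u \<inter> Acl w t X v"

definition gg :: "('a set \<Rightarrow> real) \<Rightarrow> real \<Rightarrow> 'a \<Rightarrow> 'a \<Rightarrow> 'a set \<Rightarrow> int" where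
  "gg w t u v X = int (KK w t (insert u X)) + int (KK w t (insert v X)) - int (KK w t X)
     - int (KK w t (insert u (insert v X)))"

lemma gg_formula:
  assumes fin: "finite X" and u: "u \<notin> X" and v: "v \<notin> X" and uv: "u \<noteq> v"
  shows "gg w t u v X = (if adjw w t u v \<or> MM w t X u v \<noteq> {} then 1 else 0) - int (card (MM w t X u v))"
proof -
  have k1: "int (KK w t (insert u X)) = int (KK w t X) + 1 - int (card (Acl w t X u))"
    using KK_vertex[OF fin u] .
  have k2: "int (KK w t (insert v X)) = int (KK w t X) + 1 - int (card (Acl w t X v))"
    using KK_vertex[OF fin v] .
  have k3: "int (KK w t (insert u (insert v X))) = int (KK w t (insert v X)) + 1
              - int (card (Acl w t (insert v X) u))"
    using KK_vertex[of "insert v X" u] fin u uv by simp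
  define B where "B = insert v (\<Union>(Acl w t X v))"
  define c where "c = (adjw w t u v \<or> (\<exists>C\<in>Acl w t X v. \<exists>c\<in>C. adjw w t u c))"
  have cM: "c = (adjw w t u v \<or> MM w t X u v \<noteq> {})"
    unfolding c_def MM_def Acl_def by auto
  have AI: "Acl w t (insert v X) u = (Acl w t X u - Acl w t X v) \<union> (if c then {B} else {})"
    unfolding B_def c_def using Acl_insert[OF fin v u uv] .
  have Bn: "B \<notin> Acl w t X u - Acl w t X v"
    using newblock_notin[OF v, of "\<Union>(Acl w t X v)" w t] Acl_sub[of w t X u] unfolding B_def by blast
  have fu: "finite (Acl w t X u)" using Acl_finite[OF fin] .
  have cd: "card (Acl w t X u - Acl w t X v) = card (Acl w t X u) - card (MM w t X u v)"
    unfolding MM_def using card_Diff_subset_Int[of "Acl w t X u" "Acl w t X v"] fu by (simp add: Diff_Int2)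
  have cle: "card (MM w t X u v) \<le> card (Acl w t X u)"
    unfolding MM_def using card_mono[OF fu] by auto
  have "int (card (Acl w t (insert v X) u)) = int (card (Acl w t X u)) - int (card (MM w t X u v))
          + (if c then 1 else 0)"
    unfolding AI using Bn cd cle fu by (auto simp: of_nat_diff)
  then show ?thesis unfolding gg_def using k1 k2 k3 cM by simp
qed

lemma MM_finite: "finite X \<Longrightarrow> finite (MM w t X u v)"
  unfolding MM_def using Acl_finite[of X w t u] by simp

lemma gg_nonpos_nadj:
  assumes "finite X" "u \<notin> X" "v \<notin> X" "u \<noteq> v" "\<not> adjw w t u v"
  shows "gg w t u v X \<le> 0"
proof -
  have "MM w t X u v \<noteq> {} \<Longrightarrow> card (MM w t X u v) \<ge> 1"
    using MM_finite[OF assms(1)] by (simp add: Suc_leI card_gt_0_iff)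
  then show ?thesis using gg_formula[OF assms(1-4)] assms(5) by auto
qed

lemma gg_nonpos_common:
  assumes fin: "finite X" "u \<notin> X" "v \<notin> X" "u \<noteq> v" and z: "z \<in> X" "adjw w t u z" "adjw w t v z"
  shows "gg w t u v X \<le> 0"
proof -
  have "cl (RL w t X) z \<in> MM w t X u v"
    unfolding MM_def Acl_def PP_def using z cl_mem[of z "RL w t X"] by auto
  then have ne: "MM w t X u v \<noteq> {}" by auto
  then have "card (MM w t X u v) \<ge> 1"
    using MM_finite[OF fin(1)] by (simp add: Suc_leI card_gt_0_iff)
  then show ?thesis using gg_formula[OF fin] ne by auto
qed

lemma gg_mono:
  assumes fin: "finite T" and s: "s \<notin> T" and u: "u \<notin> T" and v: "v \<notin> T"
    and d: "s \<noteq> u" "s \<noteq> v" "u \<noteq> v"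
    and Q: "card (MM w t T u v \<inter> Acl w t T s) \<le> 1"
  shows "gg w t u v (insert s T) \<le> gg w t u v T"
proof -
  define B where "B = insert s (\<Union>(Acl w t T s))"
  define cu where "cu = (adjw w t u s \<or> (\<exists>C\<in>Acl w t T s. \<exists>c\<in>C. adjw w t u c))"
  define cv where "cv = (adjw w t v s \<or> (\<exists>C\<in>Acl w t T s. \<exists>c\<in>C. adjw w t v c))"
  have Au: "Acl w t (insert s T) u = (Acl w t T u - Acl w t T s) \<union> (if cu then {B} else {})"
    unfolding B_def cu_def using Acl_insert[OF fin s u] d by auto
  have Av: "Acl w t (insert s T) v = (Acl w t T v - Acl w t T s) \<union> (if cv then {B} else {})"
    unfolding B_def cv_def using Acl_insert[OF fin s v] d by auto
  have Bn: "B \<notin> PP (RL w t T) T" using newblock_notin[OF s, of "\<Union>(Acl w t T s)" w t] unfolding B_def .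
  have Bu: "B \<notin> Acl w t T u" and Bv: "B \<notin> Acl w t T v"
    using Bn Acl_sub[of w t T u] Acl_sub[of w t T v] by auto
  have M': "MM w t (insert s T) u v = (MM w t T u v - Acl w t T s) \<union> (if cu \<and> cv then {B} else {})"
    unfolding MM_def Au Av using Bu Bv by (cases cu; cases cv) auto
  have fM: "finite (MM w t T u v)" using MM_finite[OF fin] .
  have Bn2: "B \<notin> MM w t T u v - Acl w t T s" using Bn Acl_sub[of w t T u] unfolding MM_def by blast
  have cardM': "int (card (MM w t (insert s T) u v)) = int (card (MM w t T u v))
      - int (card (MM w t T u v \<inter> Acl w t T s)) + (if cu \<and> cv then 1 else 0)"
  proof -
    have "card (MM w t T u v - Acl w t T s) = card (MM w t T u v) - card (MM w t T u v \<inter> Acl w t T s)"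
      using card_Diff_subset_Int fM by (simp add: Diff_Int2 card_Diff_subset_Int)
    moreover have "card (MM w t T u v \<inter> Acl w t T s) \<le> card (MM w t T u v)"
      using card_mono[OF fM] by auto
    ultimately show ?thesis unfolding M' using Bn2 fM by (auto simp: of_nat_diff)
  qed
  have impl: "MM w t T u v \<inter> Acl w t T s \<noteq> {} \<Longrightarrow> cu \<and> cv"
    unfolding cu_def cv_def MM_def Acl_def by blast
  have ge: "card (MM w t (insert s T) u v) \<ge> card (MM w t T u v)"
  proof (cases "MM w t T u v \<inter> Acl w t T s = {}")
    case True then show ?thesis using cardM' by (simp split: if_splits)
  next
    case False then show ?thesis using cardM' Q impl by auto
  qed
  have f2: "finite (MM w t (insert s T) u v)" using MM_finite[of "insert s T"] fin by simp
  have "gg w t u v (insert s T) = (if adjw w t u v \<or> MM w t (insert s T) u v \<noteq> {} then 1 else 0)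
           - int (card (MM w t (insert s T) u v))"
    using gg_formula[of "insert s T" u v w t] fin s u v d by auto
  moreover have "gg w t u v T = (if adjw w t u v \<or> MM w t T u v \<noteq> {} then 1 else 0)
           - int (card (MM w t T u v))"
    using gg_formula[OF fin u v d(3)] .
  moreover have "MM w t (insert s T) u v \<noteq> {} \<longleftrightarrow> card (MM w t (insert s T) u v) \<noteq> 0"
    using f2 by simp
  moreover have "MM w t T u v \<noteq> {} \<longleftrightarrow> card (MM w t T u v) \<noteq> 0"
    using fM by simp
  ultimately show ?thesis using ge by (simp split: if_splits)
qed

definition RF :: "'a set set \<Rightarrow> ('a \<times> 'a) set" where
  "RF F = {(a,b). {a,b} \<in> F}"

definition KF :: "'a set \<Rightarrow> 'a set set \<Rightarrow> nat" where
  "KF X F = card (PP (RF F) X)"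

definition Et :: "('a set \<Rightarrow> real) \<Rightarrow> real \<Rightarrow> 'a set \<Rightarrow> 'a set set" where
  "Et w t X = {e \<in> cedges X. w e \<le> t}"

lemma cedges_iff: "{a,b} \<in> cedges X \<longleftrightarrow> a \<in> X \<and> b \<in> X \<and> a \<noteq> b"
proof
  assume "{a,b} \<in> cedges X"
  then obtain x y where "{a,b} = {x,y}" "x \<in> X" "y \<in> X" "x \<noteq> y" unfolding cedges_def by auto
  then show "a \<in> X \<and> b \<in> X \<and> a \<noteq> b" by (auto simp: doubleton_eq_iff)
next
  assume "a \<in> X \<and> b \<in> X \<and> a \<noteq> b"
  then show "{a,b} \<in> cedges X" unfolding cedges_def by auto
qed

lemma cedges_single: "{a} \<notin> cedges X"
  using cedges_iff[of a a X] by simp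

lemma cedges_elem: "e \<in> cedges X \<Longrightarrow> \<exists>a b. e = {a,b} \<and> a \<in> X \<and> b \<in> X \<and> a \<noteq> b"
  unfolding cedges_def by auto

lemma cedges_mono: "X \<subseteq> Y \<Longrightarrow> cedges X \<subseteq> cedges Y"
  unfolding cedges_def by auto

lemma cedges_finite: "finite X \<Longrightarrow> finite (cedges X)"
proof -
  assume f: "finite X"
  have "cedges X \<subseteq> (\<lambda>(x,y). {x,y}) ` (X \<times> X)" unfolding cedges_def by auto
  then show ?thesis using f by (meson finite_SigmaI finite_imageI finite_subset)
qed

lemma RF_sym: "sym (RF F)"
  unfolding RF_def sym_def by (auto simp: insert_commute)

lemma RF_sub: "F \<subseteq> cedges X \<Longrightarrow> RF F \<subseteq> X \<times> X"
  unfolding RF_def by (auto simp: cedges_iff cedges_single)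

lemma RF_mono: "F \<subseteq> G \<Longrightarrow> RF F \<subseteq> RF G"
  unfolding RF_def by auto

lemma RF_Et: "RF (Et w t X) = RL w t X"
  unfolding RF_def Et_def RL_def adjw_def by (auto simp: cedges_iff cedges_single)

lemma KF_Et: "KF X (Et w t X) = KK w t X"
  unfolding KF_def KK_def RF_Et ..

lemma edge_add:
  assumes fin: "finite X" and F: "F \<subseteq> cedges X" and e: "{a,b} \<in> cedges X"
  shows "(a,b) \<in> (RF F)\<^sup>* \<Longrightarrow> KF X (insert {a,b} F) = KF X F"
    and "(a,b) \<notin> (RF F)\<^sup>* \<Longrightarrow> KF X (insert {a,b} F) + 1 = KF X F"
proof -
  have abX: "a \<in> X" "b \<in> X" "a \<noteq> b" using e by (simp_all add: cedges_iff)
  define Y where "Y = {a,b}"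
  have rt: "(RF (insert {a,b} F))\<^sup>* = (RF F \<union> Y \<times> Y)\<^sup>*"
  proof (rule rtrancl_eqI)
    show "RF (insert {a, b} F) \<subseteq> (RF F \<union> Y \<times> Y)\<^sup>*"
    proof
      fix z assume "z \<in> RF (insert {a, b} F)"
      then obtain p q where z: "z = (p,q)" "{p,q} = {a,b} \<or> {p,q} \<in> F" unfolding RF_def by auto
      then have "(p,q) \<in> RF F \<union> Y \<times> Y" unfolding RF_def Y_def by (auto simp: doubleton_eq_iff)
      then show "z \<in> (RF F \<union> Y \<times> Y)\<^sup>*" using z by auto
    qed
  next
    show "RF F \<union> Y \<times> Y \<subseteq> (RF (insert {a, b} F))\<^sup>*"
    proof
      fix z assume z: "z \<in> RF F \<union> Y \<times> Y"
      show "z \<in> (RF (insert {a, b} F))\<^sup>*"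
      proof (cases "z \<in> RF F")
        case True
        then show ?thesis using RF_mono[of F "insert {a,b} F"] by auto
      next
        case False
        then obtain p q where pq: "z = (p,q)" "p \<in> {a,b}" "q \<in> {a,b}" using z Y_def by auto
        show ?thesis
        proof (cases "p = q")
          case True then show ?thesis using pq by simp
        next
          case False
          then have "{p,q} = {a,b}" using pq by auto
          then have "(p,q) \<in> RF (insert {a,b} F)" unfolding RF_def by simp
          then show ?thesis using pq by auto
        qed
      qed
    qed
  qed
  have s: "sym (RF F)" by (rule RF_sym)
  have RX: "RF F \<subseteq> X \<times> X" using RF_sub[OF F] .
  have YX: "Y \<subseteq> X" "Y \<noteq> {}" using abX unfolding Y_def by auto
  define A where "A = {C \<in> PP (RF F) X. C \<inter> Y \<noteq> {}}"
  have c1: "card (PP (RF F \<union> Y \<times> Y) X) + card A = card (PP (RF F) X) + 1"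
    using card_PP_clique(1)[OF s RX YX fin] unfolding A_def .
  have KFeq: "KF X (insert {a,b} F) = card (PP (RF F \<union> Y \<times> Y) X)"
    unfolding KF_def using PP_cong[OF rt] by simp
  have AA: "A = {cl (RF F) a, cl (RF F) b}"
  proof
    show "A \<subseteq> {cl (RF F) a, cl (RF F) b}"
    proof
      fix C assume "C \<in> A"
      then obtain c y where c: "c \<in> X" "C = cl (RF F) c" "y \<in> C" "y \<in> Y"
        unfolding A_def PP_def by auto
      then have "cl (RF F) y = C" using cl_eq[OF s] by metis
      then show "C \<in> {cl (RF F) a, cl (RF F) b}" using c(4) unfolding Y_def by auto
    qed
  next
    show "{cl (RF F) a, cl (RF F) b} \<subseteq> A"
      unfolding A_def PP_def Y_def using abX cl_mem[of a "RF F"] cl_mem[of b "RF F"] by auto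
  qed
  show "(a,b) \<in> (RF F)\<^sup>* \<Longrightarrow> KF X (insert {a,b} F) = KF X F"
  proof -
    assume "(a,b) \<in> (RF F)\<^sup>*"
    then have "cl (RF F) a = cl (RF F) b" using cl_eq_iff[OF s] by simp
    then have "card A = 1" unfolding AA by simp
    then show ?thesis using c1 KFeq unfolding KF_def by simp
  qed
  show "(a,b) \<notin> (RF F)\<^sup>* \<Longrightarrow> KF X (insert {a,b} F) + 1 = KF X F"
  proof -
    assume "(a,b) \<notin> (RF F)\<^sup>*"
    then have "cl (RF F) a \<noteq> cl (RF F) b" using cl_eq_iff[OF s] by simp
    then have "card A = 2" unfolding AA by simp
    then show ?thesis using c1 KFeq unfolding KF_def by simp
  qed
qed

lemma KF_bounds:
  assumes fin: "finite X" and F: "F \<subseteq> cedges X" and D: "finite D" "D \<subseteq> cedges X"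
  shows "KF X (F \<union> D) \<le> KF X F \<and> KF X F \<le> KF X (F \<union> D) + card D"
  using D
proof (induction D rule: finite_induct)
  case empty then show ?case by simp
next
  case (insert e D)
  obtain a b where e: "e = {a,b}" "a \<in> X" "b \<in> X" "a \<noteq> b" using insert.prems cedges_elem by blast
  have FD: "F \<union> D \<subseteq> cedges X" using F insert.prems by auto
  have eX: "{a,b} \<in> cedges X" using e by (simp add: cedges_iff)
  have IH: "KF X (F \<union> D) \<le> KF X F \<and> KF X F \<le> KF X (F \<union> D) + card D" using insert by simp
  have eq: "F \<union> insert e D = insert {a,b} (F \<union> D)" using e by simp
  have cD: "card (insert e D) = card D + 1" using insert.hyps by simp
  show ?case
  proof (cases "(a,b) \<in> (RF (F \<union> D))\<^sup>*")
    case True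
    then show ?thesis using edge_add(1)[OF fin FD eX] IH eq cD by simp
  next
    case False
    then show ?thesis using edge_add(2)[OF fin FD eX] IH eq cD by simp
  qed
qed

lemma KF_connected:
  assumes fin: "finite X" and ne: "X \<noteq> {}" and con: "\<forall>x\<in>X. \<forall>y\<in>X. (x,y) \<in> (RF F)\<^sup>*"
    and F: "F \<subseteq> cedges X"
  shows "KF X F = 1"
proof -
  obtain x where x: "x \<in> X" using ne by auto
  have "cl (RF F) y = cl (RF F) x" if "y \<in> X" for y
  proof -
    have "(y,x) \<in> (RF F)\<^sup>*" using con x that by simp
    then show ?thesis using cl_eq_iff[OF RF_sym, of F y x] by simp
  qed
  then have "cl (RF F) ` X = (\<lambda>_. cl (RF F) x) ` X" by (intro image_cong) auto
  then have "PP (RF F) X = {cl (RF F) x}" unfolding PP_def using x by (simp only: image_constant_conv) auto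
  then show ?thesis unfolding KF_def by simp
qed

lemma KF_empty:
  assumes fin: "finite X"
  shows "KF X {} = card X"
proof -
  have e: "RF {} = {}" unfolding RF_def by simp
  have c: "cl (RF {}) a = {a}" for a unfolding cl_def e by simp
  have "PP (RF {}) X = (\<lambda>a. {a}) ` X" unfolding PP_def by (simp add: c)
  moreover have "inj_on (\<lambda>a. {a}) X" by (auto simp: inj_on_def)
  ultimately show ?thesis unfolding KF_def by (simp add: card_image)
qed

lemma spanning_lower:
  assumes fin: "finite X" and ne: "X \<noteq> {}" and T: "is_spanning_tree X T"
  shows "card {e \<in> T. w e \<le> t} + KK w t X \<le> card X"
proof -
  have TX: "T \<subseteq> cedges X" and cT: "card T = card X - 1"
    and con: "\<forall>x\<in>X. \<forall>y\<in>X. (x,y) \<in> (RF T)\<^sup>*"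
    using T unfolding is_spanning_tree_def RF_def by auto
  have finT: "finite T" using finite_subset[OF TX cedges_finite[OF fin]] .
  define F where "F = {e \<in> T. w e \<le> t}"
  have FX: "F \<subseteq> cedges X" using TX unfolding F_def by auto
  have "F \<union> (T - F) = T" unfolding F_def by auto
  then have b1: "KF X F \<le> KF X T + card (T - F)"
    using KF_bounds[OF fin FX, of "T - F"] finT TX by auto
  have "KF X T = 1" using KF_connected[OF fin ne con TX] .
  moreover have "card (T - F) = card T - card F"
    using card_Diff_subset[of F T] finT unfolding F_def by auto
  moreover have "card F \<le> card T" using card_mono[OF finT] unfolding F_def by auto
  moreover have "KK w t X \<le> KF X F"
  proof -
    have EX: "Et w t X \<subseteq> cedges X" unfolding Et_def by auto
    have FE: "F \<subseteq> Et w t X" unfolding F_def Et_def using TX by auto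
    have "F \<union> (Et w t X - F) = Et w t X" using FE by auto
    moreover have "finite (Et w t X)" using finite_subset[OF EX cedges_finite[OF fin]] .
    ultimately have "KF X (Et w t X) \<le> KF X F"
      using KF_bounds[OF fin FX, of "Et w t X - F"] EX by auto
    then show ?thesis using KF_Et by metis
  qed
  moreover have "card X \<ge> 1" using fin ne by (simp add: Suc_leI card_gt_0_iff)
  ultimately show ?thesis using b1 cT unfolding F_def by linarith
qed

definition forest :: "'a set \<Rightarrow> 'a set set \<Rightarrow> bool" where
  "forest X F \<longleftrightarrow> card F + KF X F = card X"

lemma ext_forest:
  assumes fin: "finite X" and E: "E \<subseteq> cedges X"
  shows "F \<subseteq> cedges X \<Longrightarrow> forest X F \<Longrightarrow> \<exists>F'. F \<subseteq> F' \<and> F' \<subseteq> F \<union> E \<and> forest X F'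
      \<and> (\<forall>a b. {a,b} \<in> F' - F \<longrightarrow> (a,b) \<notin> (RF F)\<^sup>*)
      \<and> (\<forall>a b. {a,b} \<in> E \<longrightarrow> (a,b) \<in> (RF F')\<^sup>*)"
proof (induction "KF X F" arbitrary: F rule: less_induct)
  case less
  show ?case
  proof (cases "\<forall>a b. {a,b} \<in> E \<longrightarrow> (a,b) \<in> (RF F)\<^sup>*")
    case True
    then show ?thesis using less.prems by (intro exI[of _ F]) auto
  next
    case False
    then obtain a b where ab: "{a,b} \<in> E" "(a,b) \<notin> (RF F)\<^sup>*" by auto
    have abX: "{a,b} \<in> cedges X" using ab E by auto
    have notF: "{a,b} \<notin> F" using ab(2) unfolding RF_def by auto
    define F1 where "F1 = insert {a,b} F"
    have finF: "finite F" using finite_subset[OF less.prems(1) cedges_finite[OF fin]] .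
    have K1: "KF X F1 + 1 = KF X F" using edge_add(2)[OF fin less.prems(1) abX ab(2)] unfolding F1_def .
    have F1X: "F1 \<subseteq> cedges X" using abX less.prems(1) unfolding F1_def by auto
    have fo1: "forest X F1" using less.prems(2) K1 notF finF unfolding forest_def F1_def by simp
    have "KF X F1 < KF X F" using K1 by simp
    from less.hyps[OF this F1X fo1] obtain F' where F':
      "F1 \<subseteq> F'" "F' \<subseteq> F1 \<union> E" "forest X F'"
      "\<forall>a b. {a,b} \<in> F' - F1 \<longrightarrow> (a,b) \<notin> (RF F1)\<^sup>*"
      "\<forall>a b. {a,b} \<in> E \<longrightarrow> (a,b) \<in> (RF F')\<^sup>*" by blast
    have mono: "(RF F)\<^sup>* \<subseteq> (RF F1)\<^sup>*" using RF_mono[of F F1] rtrancl_mono unfolding F1_def by blast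
    have new: "(p,q) \<notin> (RF F)\<^sup>*" if "{p,q} \<in> F' - F" for p q
    proof (cases "{p,q} = {a,b}")
      case True
      then have "(p,q) = (a,b) \<or> (p,q) = (b,a)" by (auto simp: doubleton_eq_iff)
      moreover have "(b,a) \<notin> (RF F)\<^sup>*" using ab(2) RF_sym[of F]
        by (meson sym_rtrancl symD)
      ultimately show ?thesis using ab(2) by auto
    next
      case False
      then have "{p,q} \<in> F' - F1" using that unfolding F1_def by auto
      then show ?thesis using F'(4) mono by auto
    qed
    have "F \<subseteq> F'" using F'(1) unfolding F1_def by auto
    moreover have "F' \<subseteq> F \<union> E" using F'(2) ab(1) unfolding F1_def by auto
    ultimately show ?thesis
      using F'(3,5) new by blast
  qed
qed

lemma kruskal:
  assumes fin: "finite X" and L: "finite L"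
  shows "\<exists>F. F \<subseteq> cedges X \<and> forest X F \<and> (\<forall>e\<in>F. \<exists>t\<in>L. w e \<le> t)
            \<and> (\<forall>t\<in>L. RL w t X \<subseteq> (RF F)\<^sup>*)
            \<and> (\<forall>t\<in>L. card {e\<in>F. w e \<le> t} + KK w t X = card X)"
  using L
proof (induction rule: finite_linorder_max_induct)
  case empty
  show ?case
    apply (rule exI[of _ "{}"])
    using KF_empty[OF fin] unfolding forest_def by simp
next
  case (insert b L)
  then obtain F where F: "F \<subseteq> cedges X" "forest X F" "\<forall>e\<in>F. \<exists>t\<in>L. w e \<le> t"
      "\<forall>t\<in>L. RL w t X \<subseteq> (RF F)\<^sup>*" "\<forall>t\<in>L. card {e\<in>F. w e \<le> t} + KK w t X = card X" by blast
  have EX: "Et w b X \<subseteq> cedges X" unfolding Et_def by auto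
  obtain F' where F': "F \<subseteq> F'" "F' \<subseteq> F \<union> Et w b X" "forest X F'"
      "\<forall>p q. {p,q} \<in> F' - F \<longrightarrow> (p,q) \<notin> (RF F)\<^sup>*"
      "\<forall>p q. {p,q} \<in> Et w b X \<longrightarrow> (p,q) \<in> (RF F')\<^sup>*"
    using ext_forest[OF fin EX F(1) F(2)] by blast
  have F'X: "F' \<subseteq> cedges X" using F'(2) F(1) EX by auto
  have allb: "\<forall>e\<in>F'. w e \<le> b"
  proof
    fix e assume "e \<in> F'"
    then have "e \<in> F \<or> e \<in> Et w b X" using F'(2) by auto
    then show "w e \<le> b"
    proof
      assume "e \<in> F"
      then obtain t where "t \<in> L" "w e \<le> t" using F(3) by auto
      then show ?thesis using insert.hyps(2) by fastforce
    qed (simp add: Et_def)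
  qed
  have RLb: "RL w b X \<subseteq> (RF F')\<^sup>*"
  proof
    fix z assume "z \<in> RL w b X"
    then have "z \<in> RF (Et w b X)" using RF_Et[of w b X] by simp
    then obtain p q where "z = (p,q)" "{p,q} \<in> Et w b X" unfolding RF_def by auto
    then show "z \<in> (RF F')\<^sup>*" using F'(5) by auto
  qed
  have mono: "(RF F)\<^sup>* \<subseteq> (RF F')\<^sup>*" using RF_mono[OF F'(1)] rtrancl_mono by blast
  have same: "{e\<in>F'. w e \<le> t} = {e\<in>F. w e \<le> t}" if t: "t \<in> L" for t
  proof -
    have "e \<in> F" if e: "e \<in> F'" "w e \<le> t" for e
    proof (rule ccontr)
      assume "e \<notin> F"
      obtain p q where pq: "e = {p,q}" "p \<in> X" "q \<in> X" "p \<noteq> q" using e(1) F'X cedges_elem by blast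
      have "(p,q) \<in> RL w t X" using pq e(2) unfolding RL_def adjw_def by auto
      then have "(p,q) \<in> (RF F)\<^sup>*" using F(4) t by auto
      then show False using F'(4) e(1) \<open>e \<notin> F\<close> pq(1) by auto
    qed
    then show ?thesis using F'(1) by auto
  qed
  have KKb: "KK w b X = KF X F'"
  proof -
    have "RF F' \<subseteq> RL w b X" unfolding RF_def RL_def adjw_def using allb F'X by (auto simp: cedges_iff cedges_single)
    then have "(RF F')\<^sup>* = (RL w b X)\<^sup>*" using rtrancl_eqI RLb by (metis r_into_rtrancl subsetI subset_iff)
    then show ?thesis unfolding KK_def KF_def using PP_cong by metis
  qed
  show ?case
  proof (rule exI[of _ F'], intro conjI)
    show "F' \<subseteq> cedges X" by fact
    show "forest X F'" by fact
    show "\<forall>e\<in>F'. \<exists>t\<in>insert b L. w e \<le> t" using allb by auto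
    show "\<forall>t\<in>insert b L. RL w t X \<subseteq> (RF F')\<^sup>*" using RLb F(4) mono by blast
    show "\<forall>t\<in>insert b L. card {e \<in> F'. w e \<le> t} + KK w t X = card X"
    proof
      fix t assume "t \<in> insert b L"
      then show "card {e \<in> F'. w e \<le> t} + KK w t X = card X"
      proof
        assume "t = b"
        then have "{e \<in> F'. w e \<le> t} = F'" using allb by auto
        then show ?thesis using KKb F'(3) \<open>t = b\<close> unfolding forest_def by simp
      next
        assume "t \<in> L" then show ?thesis using same F(5) by simp
      qed
    qed
  qed
qed

definition nxt :: "real set \<Rightarrow> real \<Rightarrow> real" where
  "nxt W t = Min {y \<in> W. t < y}"

lemma tele:
  assumes fin: "finite W"
  shows "x \<in> W \<Longrightarrow> (\<Sum>t\<in>{t\<in>W. t < x}. nxt W t - t) = x - Min W"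
proof (induction "card {t\<in>W. t < x}" arbitrary: x rule: less_induct)
  case less
  show ?case
  proof (cases "{t\<in>W. t < x} = {}")
    case True
    have "W \<noteq> {}" using less.prems by auto
    then have "Min W \<in> W" using fin by simp
    moreover have "Min W \<le> x" using less.prems fin by simp
    ultimately have "Min W = x" using True by force
    moreover have "(\<Sum>t\<in>{t\<in>W. t < x}. nxt W t - t) = 0" by (simp only: True sum.empty)
    ultimately show ?thesis by simp
  next
    case False
    define p where "p = Max {t\<in>W. t < x}"
    have fS: "finite {t\<in>W. t < x}" using fin by simp
    have p: "p \<in> W" "p < x" using Max_in[OF fS False] unfolding p_def by auto
    have pmax: "t \<le> p" if "t \<in> W" "t < x" for t using Max_ge[OF fS] that unfolding p_def by auto
    have S: "{t\<in>W. t < x} = insert p {t\<in>W. t < p}" using p pmax by force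
    have nx: "nxt W p = x"
    proof -
      have f2: "finite {y \<in> W. p < y}" using fin by simp
      have "x \<in> {y \<in> W. p < y}" using p less.prems by simp
      moreover have "\<forall>y\<in>{y \<in> W. p < y}. x \<le> y" using pmax by force
      ultimately show ?thesis unfolding nxt_def using f2 by (intro Min_eqI) auto
    qed
    have "card {t\<in>W. t < p} < card {t\<in>W. t < x}"
      using S fS by (simp add: card_insert_if)
    then have IH: "(\<Sum>t\<in>{t\<in>W. t < p}. nxt W t - t) = p - Min W" using less.hyps p by blast
    have "(\<Sum>t\<in>{t\<in>W. t < x}. nxt W t - t) = (nxt W p - p) + (\<Sum>t\<in>{t\<in>W. t < p}. nxt W t - t)"
      unfolding S using fin by (simp add: sum.insert)
    then show ?thesis using IH nx by simp
  qed
qed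

lemma nxt_gt:
  assumes fin: "finite W" and t: "t \<in> W" "t < Max W"
  shows "nxt W t > t"
proof -
  have ne: "{y \<in> W. t < y} \<noteq> {}" using t fin by (metis (mono_tags, lifting) Max_in empty_Collect_eq empty_iff)
  have "nxt W t \<in> {y \<in> W. t < y}" unfolding nxt_def using fin ne by (intro Min_in) auto
  then show ?thesis by simp
qed

lemma cost_decomp:
  assumes fin: "finite W" and F: "finite F" and FW: "\<forall>e\<in>F. w e \<in> W"
  shows "(\<Sum>e\<in>F. w e) = Min W * real (card F)
           + (\<Sum>t\<in>{t\<in>W. t < Max W}. (nxt W t - t) * real (card {e\<in>F. t < w e}))"
proof -
  define W' where "W' = {t\<in>W. t < Max W}"
  have we: "w e = Min W + (\<Sum>t\<in>W'. if t < w e then nxt W t - t else 0)" if "e \<in> F" for e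
  proof -
    have wW: "w e \<in> W" using FW that by auto
    have "w e \<le> Max W" using wW fin by simp
    then have "{t\<in>W'. t < w e} = {t\<in>W. t < w e}" unfolding W'_def by auto
    moreover have "finite W'" using fin unfolding W'_def by simp
    then have "(\<Sum>t\<in>W'. if t < w e then nxt W t - t else 0) = (\<Sum>t\<in>{t\<in>W'. t < w e}. nxt W t - t)"
      by (simp only: sum.inter_filter)
    ultimately show ?thesis using tele[OF fin wW] by simp
  qed
  have "(\<Sum>e\<in>F. w e) = (\<Sum>e\<in>F. Min W + (\<Sum>t\<in>W'. if t < w e then nxt W t - t else 0))"
    using we by (rule sum.cong[OF refl])
  also have "\<dots> = Min W * real (card F) + (\<Sum>e\<in>F. \<Sum>t\<in>W'. if t < w e then nxt W t - t else 0)"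
    by (simp add: sum.distrib)
  also have "(\<Sum>e\<in>F. \<Sum>t\<in>W'. if t < w e then nxt W t - t else 0)
        = (\<Sum>t\<in>W'. \<Sum>e\<in>F. if t < w e then nxt W t - t else 0)"
    by (rule sum.swap)
  also have "\<dots> = (\<Sum>t\<in>W'. (nxt W t - t) * real (card {e\<in>F. t < w e}))"
  proof (rule sum.cong[OF refl])
    fix t
    have "(\<Sum>e\<in>F. if t < w e then nxt W t - t else 0) = (\<Sum>e\<in>{e\<in>F. t < w e}. nxt W t - t)"
      by (simp only: sum.inter_filter[OF F])
    then show "(\<Sum>e\<in>F. if t < w e then nxt W t - t else 0) = (nxt W t - t) * real (card {e\<in>F. t < w e})"
      by (simp add: mult.commute)
  qed
  finally show ?thesis unfolding W'_def .
qed

definition Phi :: "('a set \<Rightarrow> real) \<Rightarrow> real set \<Rightarrow> 'a set \<Rightarrow> real" where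
  "Phi w W X = Min W * (real (card X) - 1)
     + (\<Sum>t\<in>{t\<in>W. t < Max W}. (nxt W t - t) * (real (KK w t X) - 1))"

lemma mst_formula:
  assumes finV: "finite V" and XV: "X \<subseteq> V" and ne: "X \<noteq> {}"
    and Wd: "W = w ` cedges V" and Wne: "W \<noteq> {}"
  shows "mst w X = Phi w W X"
proof -
  have finX: "finite X" using finite_subset[OF XV finV] .
  have finW: "finite W" using Wd cedges_finite[OF finV] by simp
  define W' where "W' = {t\<in>W. t < Max W}"
  have cX: "card X \<ge> 1" using finX ne by (simp add: Suc_leI card_gt_0_iff)
  have eW: "\<forall>e\<in>T. w e \<in> W" if "T \<subseteq> cedges X" for T
    using that cedges_mono[OF XV] Wd by auto
  have dpos: "nxt W t - t > 0" if "t \<in> W'" for t using nxt_gt[OF finW] that unfolding W'_def by auto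
  define Trees where "Trees = {T. is_spanning_tree X T}"
  have finTrees: "finite Trees"
  proof -
    have "Trees \<subseteq> Pow (cedges X)" unfolding Trees_def is_spanning_tree_def by auto
    then show ?thesis using cedges_finite[OF finX] finite_subset by blast
  qed
  have lower: "(\<Sum>e\<in>T. w e) \<ge> Phi w W X" if T: "T \<in> Trees" for T
  proof -
    have sp: "is_spanning_tree X T" using T unfolding Trees_def by simp
    have TX: "T \<subseteq> cedges X" and cT: "card T = card X - 1" using sp unfolding is_spanning_tree_def by auto
    have finT: "finite T" using finite_subset[OF TX cedges_finite[OF finX]] .
    have cnt: "real (card {e\<in>T. t < w e}) \<ge> real (KK w t X) - 1" for t
    proof -
      have b: "card {e \<in> T. w e \<le> t} + KK w t X \<le> card X" using spanning_lower[OF finX ne sp] .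
      have "{e\<in>T. t < w e} = T - {e \<in> T. w e \<le> t}" by auto
      then have "card {e\<in>T. t < w e} = card T - card {e \<in> T. w e \<le> t}"
        using card_Diff_subset[of "{e \<in> T. w e \<le> t}" T] finT by auto
      moreover have "card {e \<in> T. w e \<le> t} \<le> card T" using card_mono[OF finT] by auto
      ultimately show ?thesis using b cT cX by linarith
    qed
    have "(\<Sum>e\<in>T. w e) = Min W * real (card T) + (\<Sum>t\<in>W'. (nxt W t - t) * real (card {e\<in>T. t < w e}))"
      using cost_decomp[OF finW finT eW[OF TX]] unfolding W'_def .
    moreover have "(\<Sum>t\<in>W'. (nxt W t - t) * real (card {e\<in>T. t < w e})) \<ge>
                   (\<Sum>t\<in>W'. (nxt W t - t) * (real (KK w t X) - 1))"
      by (rule sum_mono) (use dpos cnt in \<open>auto intro: mult_left_mono\<close>)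
    moreover have "real (card T) = real (card X) - 1" using cT cX by simp
    ultimately show ?thesis unfolding Phi_def W'_def by simp
  qed
  obtain F where F: "F \<subseteq> cedges X" "forest X F" "\<forall>e\<in>F. \<exists>t\<in>W. w e \<le> t"
      "\<forall>t\<in>W. RL w t X \<subseteq> (RF F)\<^sup>*" "\<forall>t\<in>W. card {e\<in>F. w e \<le> t} + KK w t X = card X"
    using kruskal[OF finX finW, of w] by blast
  have finF: "finite F" using finite_subset[OF F(1) cedges_finite[OF finX]] .
  have con: "\<forall>x\<in>X. \<forall>y\<in>X. (x,y) \<in> (RF F)\<^sup>*"
  proof (intro ballI)
    fix x y assume xy: "x \<in> X" "y \<in> X"
    show "(x,y) \<in> (RF F)\<^sup>*"
    proof (cases "x = y")
      case False
      then have "{x,y} \<in> cedges V" using xy XV by (simp add: cedges_iff subset_iff)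
      then have "w {x,y} \<in> W" using Wd by simp
      then have "w {x,y} \<le> Max W" using finW by simp
      then have "(x,y) \<in> RL w (Max W) X" unfolding RL_def adjw_def using xy False by simp
      moreover have "Max W \<in> W" using finW Wne by simp
      ultimately show ?thesis using F(4) by blast
    qed simp
  qed
  have K1: "KF X F = 1" using KF_connected[OF finX ne con F(1)] .
  have cF: "card F = card X - 1" using F(2) K1 unfolding forest_def by simp
  have spF: "is_spanning_tree X F" unfolding is_spanning_tree_def using F(1) cF con unfolding RF_def by simp
  have costF: "(\<Sum>e\<in>F. w e) = Phi w W X"
  proof -
    have cnt: "real (card {e\<in>F. t < w e}) = real (KK w t X) - 1" if "t \<in> W'" for t
    proof -
      have tW: "t \<in> W" using that unfolding W'_def by simp
      have b: "card {e \<in> F. w e \<le> t} + KK w t X = card X" using F(5) tW by simp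
      have "{e\<in>F. t < w e} = F - {e \<in> F. w e \<le> t}" by auto
      then have "card {e\<in>F. t < w e} = card F - card {e \<in> F. w e \<le> t}"
        using card_Diff_subset[of "{e \<in> F. w e \<le> t}" F] finF by auto
      moreover have "card {e \<in> F. w e \<le> t} \<le> card F" using card_mono[OF finF] by auto
      ultimately show ?thesis using b cF cX by (simp add: of_nat_diff)
    qed
    have "(\<Sum>e\<in>F. w e) = Min W * real (card F) + (\<Sum>t\<in>W'. (nxt W t - t) * real (card {e\<in>F. t < w e}))"
      using cost_decomp[OF finW finF eW[OF F(1)]] unfolding W'_def .
    also have "(\<Sum>t\<in>W'. (nxt W t - t) * real (card {e\<in>F. t < w e})) =
               (\<Sum>t\<in>W'. (nxt W t - t) * (real (KK w t X) - 1))"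
      using cnt by (intro sum.cong) auto
    finally show ?thesis unfolding Phi_def W'_def using cF cX by (simp add: of_nat_diff)
  qed
  have "mst w X = Min ((\<lambda>T. \<Sum>e\<in>T. w e) ` Trees)" unfolding mst_def Trees_def ..
  also have "\<dots> = Phi w W X"
  proof (rule Min_eqI)
    show "finite ((\<lambda>T. \<Sum>e\<in>T. w e) ` Trees)" using finTrees by simp
    show "\<And>y. y \<in> (\<lambda>T. \<Sum>e\<in>T. w e) ` Trees \<Longrightarrow> Phi w W X \<le> y" using lower by auto
    show "Phi w W X \<in> (\<lambda>T. \<Sum>e\<in>T. w e) ` Trees" using spF costF unfolding Trees_def by force
  qed
  finally show ?thesis .
qed

lemma f_formula:
  assumes finV: "finite V" and XV: "X \<subseteq> V" and ne: "X \<noteq> {}"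
    and Wd: "W = w ` cedges V" and Wne: "W \<noteq> {}"
    and u: "u \<in> V" "u \<notin> X" and v: "v \<in> V" "v \<notin> X" and uv: "u \<noteq> v"
  shows "f_uv w u v X = (\<Sum>t\<in>{t\<in>W. t < Max W}. (nxt W t - t) * real_of_int (gg w t u v X))"
proof -
  have finX: "finite X" using finite_subset[OF XV finV] .
  have m0: "mst w X = Phi w W X" using mst_formula[OF finV XV ne Wd Wne] .
  have m1: "mst w (insert u X) = Phi w W (insert u X)" using mst_formula[OF finV _ _ Wd Wne] XV u by auto
  have m2: "mst w (insert v X) = Phi w W (insert v X)" using mst_formula[OF finV _ _ Wd Wne] XV v by auto
  have m3: "mst w (insert u (insert v X)) = Phi w W (insert u (insert v X))"
    using mst_formula[OF finV _ _ Wd Wne] XV u v by auto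
  have c1: "card (insert u X) = card X + 1" using finX u by simp
  have c2: "card (insert v X) = card X + 1" using finX v by simp
  have c3: "card (insert u (insert v X)) = card X + 2" using finX u v uv by simp
  define W' where "W' = {t\<in>W. t < Max W}"
  let ?d = "\<lambda>t. nxt W t - t"
  have "f_uv w u v X = Phi w W (insert u X) + Phi w W (insert v X) - Phi w W X - Phi w W (insert u (insert v X))"
    unfolding f_uv_def m0 m1 m2 m3 ..
  also have "\<dots> = (\<Sum>t\<in>W'. ?d t * (real (KK w t (insert u X)) - 1))
               + (\<Sum>t\<in>W'. ?d t * (real (KK w t (insert v X)) - 1))
               - (\<Sum>t\<in>W'. ?d t * (real (KK w t X) - 1))
               - (\<Sum>t\<in>W'. ?d t * (real (KK w t (insert u (insert v X))) - 1))"
    unfolding Phi_def W'_def using c1 c2 c3 by (simp add: algebra_simps)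
  also have "\<dots> = (\<Sum>t\<in>W'. ?d t * (real (KK w t (insert u X)) - 1) + ?d t * (real (KK w t (insert v X)) - 1)
               - ?d t * (real (KK w t X) - 1) - ?d t * (real (KK w t (insert u (insert v X))) - 1))"
    by (simp add: sum.distrib sum_subtractf)
  also have "\<dots> = (\<Sum>t\<in>W'. ?d t * real_of_int (gg w t u v X))"
    by (rule sum.cong[OF refl]) (simp add: gg_def algebra_simps)
  finally show ?thesis unfolding W'_def .
qed

definition vpath :: "('a \<Rightarrow> 'a \<Rightarrow> bool) \<Rightarrow> 'a \<Rightarrow> 'a \<Rightarrow> 'a set \<Rightarrow> 'a list \<Rightarrow> bool" where
  "vpath adj a b C P \<longleftrightarrow> P \<noteq> [] \<and> set P \<subseteq> C \<and> adj a (hd P) \<and> adj (last P) b \<and>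
     (\<forall>i. Suc i < length P \<longrightarrow> adj (P!i) (P!Suc i))"

lemma walk_exists:
  assumes "(p,q) \<in> R\<^sup>*"
  shows "\<exists>xs. xs \<noteq> [] \<and> hd xs = p \<and> last xs = q \<and> set xs \<subseteq> {z. (p,z) \<in> R\<^sup>*} \<and>
           (\<forall>i. Suc i < length xs \<longrightarrow> (xs!i, xs!Suc i) \<in> R)"
  using assms
proof (induction rule: rtrancl_induct)
  case base
  show ?case by (intro exI[of _ "[p]"]) auto
next
  case (step b c)
  then obtain xs where xs: "xs \<noteq> []" "hd xs = p" "last xs = b" "set xs \<subseteq> {z. (p,z) \<in> R\<^sup>*}"
    "\<forall>i. Suc i < length xs \<longrightarrow> (xs!i, xs!Suc i) \<in> R" by blast
  have "(p,c) \<in> R\<^sup>*" using step.hyps by (rule rtrancl_into_rtrancl)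
  moreover have "\<forall>i. Suc i < length (xs @ [c]) \<longrightarrow> ((xs @ [c])!i, (xs @ [c])!Suc i) \<in> R"
  proof (intro allI impI)
    fix i assume i: "Suc i < length (xs @ [c])"
    show "((xs @ [c])!i, (xs @ [c])!Suc i) \<in> R"
    proof (cases "Suc i < length xs")
      case True
      then show ?thesis using xs(5) by (simp add: nth_append)
    next
      case False
      then have "Suc i = length xs" using i by simp
      then have "i = length xs - 1" by simp
      then have "(xs @ [c])!i = last xs" "(xs @ [c])!Suc i = c" using xs(1) \<open>Suc i = length xs\<close>
        by (simp_all add: nth_append last_conv_nth)
      then show ?thesis using xs(3) step.hyps(2) by simp
    qed
  qed
  ultimately show ?case using xs by (intro exI[of _ "xs @ [c]"]) auto
qed

lemma splice_vpath:
  assumes P: "vpath adj a b C P" and ij: "i < j" "j < length P"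
    and junc: "if i = 0 then adj a (P!j) else adj (P!(i-1)) (P!j)"
  shows "vpath adj a b C (take i P @ drop j P)" and "length (take i P @ drop j P) < length P"
proof -
  let ?Q = "take i P @ drop j P"
  have lenQ: "length ?Q = i + (length P - j)" using ij by simp
  show "length ?Q < length P" using lenQ ij by simp
  have nthQ: "?Q ! k = (if k < i then P!k else P!(j + k - i))" if "k < length ?Q" for k
    using that ij by (auto simp: nth_append)
  have ne: "?Q \<noteq> []" using ij by simp
  have "set ?Q \<subseteq> set P" by (auto dest: in_set_takeD in_set_dropD)
  then have setQ: "set ?Q \<subseteq> C" using P unfolding vpath_def by auto
  have hdQ: "adj a (hd ?Q)"
  proof (cases "i = 0")
    case True
    then have "hd ?Q = P!j" using ij by (simp add: hd_drop_conv_nth)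
    then show ?thesis using junc True by simp
  next
    case False
    then have "hd ?Q = hd P" using ij P unfolding vpath_def by (simp add: hd_append)
    then show ?thesis using P unfolding vpath_def by simp
  qed
  have lastQ: "last ?Q = last P" using ij by (simp add: last_append)
  have cons: "\<forall>k. Suc k < length ?Q \<longrightarrow> adj (?Q!k) (?Q!Suc k)"
  proof (intro allI impI)
    fix k assume k: "Suc k < length ?Q"
    have Pc: "\<And>m. Suc m < length P \<Longrightarrow> adj (P!m) (P!Suc m)" using P unfolding vpath_def by blast
    show "adj (?Q!k) (?Q!Suc k)"
    proof (cases "Suc k < i")
      case True
      then show ?thesis using nthQ[of k] nthQ[of "Suc k"] k Pc[of k] ij by simp
    next
      case False
      show ?thesis
      proof (cases "Suc k = i")
        case True
        then have "?Q!k = P!(i-1)" "?Q!Suc k = P!j" using nthQ[of k] nthQ[of "Suc k"] k by auto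
        then show ?thesis using junc True by (simp split: if_splits)
      next
        case False2: False
        then have "k \<ge> i" using False by simp
        then have "?Q!k = P!(j + k - i)" "?Q!Suc k = P!Suc (j + k - i)"
          using nthQ[of k] nthQ[of "Suc k"] k by (auto simp: Suc_diff_le)
        moreover have "Suc (j + k - i) < length P" using k lenQ \<open>k \<ge> i\<close> ij by linarith
        ultimately show ?thesis using Pc by simp
      qed
    qed
  qed
  show "vpath adj a b C ?Q" unfolding vpath_def using ne setQ hdQ lastQ cons P unfolding vpath_def by simp
qed

lemma take_vpath:
  assumes P: "vpath adj a b C P" and j: "Suc j < length P" and aj: "adj (P!j) b"
  shows "vpath adj a b C (take (Suc j) P)" and "length (take (Suc j) P) < length P"
proof -
  show "length (take (Suc j) P) < length P" using j by simp
  have "take (Suc j) P \<noteq> []" using j by (cases P) auto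
  moreover have "set (take (Suc j) P) \<subseteq> set P" by (auto dest: in_set_takeD)
  then have "set (take (Suc j) P) \<subseteq> C" using P unfolding vpath_def by auto
  moreover have "hd (take (Suc j) P) = hd P" using j P unfolding vpath_def by simp
  moreover have "last (take (Suc j) P) = P!j"
  proof -
    have "take (Suc j) P \<noteq> []" using j by (cases P) auto
    then have "last (take (Suc j) P) = take (Suc j) P ! (length (take (Suc j) P) - 1)" by (rule last_conv_nth)
    then show ?thesis using j by simp
  qed
  moreover have "\<forall>i. Suc i < length (take (Suc j) P) \<longrightarrow> adj (take (Suc j) P!i) (take (Suc j) P!Suc i)"
    using P j unfolding vpath_def by auto
  ultimately show "vpath adj a b C (take (Suc j) P)" using P aj unfolding vpath_def by simp
qed

lemma induced_path:
  assumes ex: "\<exists>P. vpath adj a b C P"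
  shows "\<exists>P. vpath adj a b C P \<and> distinct P
     \<and> (\<forall>j. 0 < j \<and> j < length P \<longrightarrow> \<not> adj a (P!j))
     \<and> (\<forall>j. Suc j < length P \<longrightarrow> \<not> adj (P!j) b)
     \<and> (\<forall>i j. Suc i < j \<and> j < length P \<longrightarrow> \<not> adj (P!i) (P!j))"
proof -
  obtain n where n: "\<exists>P. vpath adj a b C P \<and> length P = n"
    and nmin: "\<And>m. m < n \<Longrightarrow> \<not>(\<exists>P. vpath adj a b C P \<and> length P = m)"
    using ex exists_least_iff[of "\<lambda>n. \<exists>P. vpath adj a b C P \<and> length P = n"] by blast
  obtain P where P: "vpath adj a b C P" "length P = n" using n by blast
  have short: "False" if "vpath adj a b C Q" "length Q < length P" for Q
    using nmin that P(2) by blast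
  have d: "distinct P"
  proof (rule ccontr)
    assume "\<not> distinct P"
    then obtain i j where ij: "i < j" "j < length P" "P!i = P!j"
      by (metis distinct_conv_nth linorder_neqE_nat)
    have junc: "if i = 0 then adj a (P!j) else adj (P!(i-1)) (P!j)"
    proof (cases "i = 0")
      case True
      have "P \<noteq> []" "adj a (hd P)" using P(1) unfolding vpath_def by auto
      then have "adj a (P!0)" by (simp add: hd_conv_nth)
      then show ?thesis using True ij by simp
    next
      case False
      have "Suc (i-1) < length P" using ij False by simp
      then have "adj (P!(i-1)) (P!Suc (i-1))" using P(1) unfolding vpath_def by blast
      moreover have "Suc (i-1) = i" using False by simp
      ultimately show ?thesis using False ij by simp
    qed
    show False using splice_vpath[OF P(1) ij(1,2) junc] short by blast
  qed
  have c1: "\<forall>j. 0 < j \<and> j < length P \<longrightarrow> \<not> adj a (P!j)"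
  proof (intro allI impI notI)
    fix j assume j: "0 < j \<and> j < length P" and aj: "adj a (P!j)"
    have "if (0::nat) = 0 then adj a (P!j) else adj (P!(0-1)) (P!j)" using aj by simp
    then show False using splice_vpath[OF P(1), of 0 j] j short by blast
  qed
  have c2: "\<forall>j. Suc j < length P \<longrightarrow> \<not> adj (P!j) b"
  proof (intro allI impI notI)
    fix j assume j: "Suc j < length P" and aj: "adj (P!j) b"
    show False using take_vpath[OF P(1) j aj] short by blast
  qed
  have c3: "\<forall>i j. Suc i < j \<and> j < length P \<longrightarrow> \<not> adj (P!i) (P!j)"
  proof (intro allI impI notI)
    fix i j assume ij: "Suc i < j \<and> j < length P" and aij: "adj (P!i) (P!j)"
    have "if Suc i = 0 then adj a (P!j) else adj (P!(Suc i - 1)) (P!j)" using aij by simp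
    then show False using splice_vpath[OF P(1), of "Suc i" j] ij short by blast
  qed
  show ?thesis using P(1) d c1 c2 c3 by blast
qed

lemma in_Gt_iff: "p \<in> V \<Longrightarrow> q \<in> V \<Longrightarrow> in_Gt V w t {p,q} \<longleftrightarrow> adjw w t p q"
  unfolding in_Gt_def adjw_def by (auto simp: cedges_iff)

lemma in_Gt_adjw: "in_Gt V w t {p,q} \<Longrightarrow> adjw w t p q"
  unfolding in_Gt_def adjw_def by (auto simp: cedges_iff cedges_single)

lemma cs_nth:
  assumes "i < length A + length B + 2"
  shows "(s # A @ x # B) ! i = (if i = 0 then s else if i \<le> length A then A!(i-1)
           else if i = Suc (length A) then x else B!(i - length A - 2))"
proof (cases i)
  case 0 then show ?thesis by simp
next
  case (Suc k)
  show ?thesis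
  proof (cases "k < length A")
    case True then show ?thesis using Suc by (simp add: nth_append)
  next
    case False
    then have "(s # A @ x # B) ! i = (x # B) ! (k - length A)" using Suc by (simp add: nth_append)
    moreover have "(x # B) ! (k - length A) = (if k = length A then x else B ! (k - length A - 1))"
      using False by (cases "k - length A") auto
    ultimately show ?thesis using Suc False by auto
  qed
qed

lemma violated_from_cycle:
  fixes s x r :: 'a and A B :: "'a list"
  defines "cs \<equiv> s # A @ x # B"
  assumes V: "s \<in> V" "x \<in> V" "set A \<subseteq> V" "set B \<subseteq> V"
    and dist: "distinct cs" and ne: "A \<noteq> []" "B \<noteq> []"
    and a1: "adjw w t s (hd A)" "adjw w t (last A) x" "adjw w t x (hd B)" "adjw w t (last B) s"
    and acA: "\<forall>i. Suc i < length A \<longrightarrow> adjw w t (A!i) (A!Suc i)"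
    and acB: "\<forall>i. Suc i < length B \<longrightarrow> adjw w t (B!i) (B!Suc i)"
    and n1: "\<forall>j. 0 < j \<and> j < length A \<longrightarrow> \<not> adjw w t s (A!j)"
    and n2: "\<forall>j. Suc j < length A \<longrightarrow> \<not> adjw w t (A!j) x"
    and n3: "\<forall>j. 0 < j \<and> j < length B \<longrightarrow> \<not> adjw w t x (B!j)"
    and n4: "\<forall>j. Suc j < length B \<longrightarrow> \<not> adjw w t (B!j) s"
    and n5: "\<forall>i j. Suc i < j \<and> j < length A \<longrightarrow> \<not> adjw w t (A!i) (A!j)"
    and n6: "\<forall>i j. Suc i < j \<and> j < length B \<longrightarrow> \<not> adjw w t (B!i) (B!j)"
    and nAB: "\<forall>p\<in>set A. \<forall>q\<in>set B. \<not> adjw w t p q"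
    and cov: "adjw w t s x \<Longrightarrow> w {s, hd A} \<le> w {s,x} \<and> w {last A, x} \<le> w {s,x} \<and>
                (\<forall>i. Suc i < length A \<longrightarrow> w {A!i, A!Suc i} \<le> w {s,x})"
    and rz: "r \<in> V" "\<exists>z \<in> set A \<union> set B. z \<noteq> r \<and> \<not> adjw w t r z"
  shows "violated_cycle_Gt V r w t cs"
proof -
  define a where "a = length A"
  define n where "n = length cs"
  have n: "n = a + length B + 2" unfolding n_def a_def cs_def by simp
  have a0: "a > 0" using ne unfolding a_def by simp
  have b0: "length B > 0" using ne by simp
  have nth: "cs ! i = (if i = 0 then s else if i \<le> a then A!(i-1)
           else if i = Suc a then x else B!(i - a - 2))" if "i < n" for i
    using cs_nth[of i A B s x] that unfolding n a_def cs_def by simp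
  have setcs: "set cs \<subseteq> V" using V unfolding cs_def by auto
  have inV: "cs ! i \<in> V" if "i < n" for i using setcs that unfolding n_def by auto
  have hdA: "hd A = A!0" using ne by (simp add: hd_conv_nth)
  have lastA: "last A = A!(a-1)" using ne unfolding a_def by (simp add: last_conv_nth)
  have hdB: "hd B = B!0" using ne by (simp add: hd_conv_nth)
  have lastB: "last B = B!(length B - 1)" using ne by (simp add: last_conv_nth)
  have sym: "\<And>p q. adjw w t p q = adjw w t q p" by (rule adjw_sym)
  have cons: "adjw w t (cs!i) (cs!Suc i)" if i: "Suc i < n" for i
  proof -
    consider (i0) "i = 0" | (iA) "0 < i" "i < a" | (ia) "i = a" | (ix) "i = Suc a" | (iB) "i > Suc a"
      by linarith
    then show ?thesis
    proof cases
      case i0 then show ?thesis using nth[of 0] nth[of 1] i a0 a1(1) hdA by simp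
    next
      case iA
      then have "cs!i = A!(i-1)" "cs!Suc i = A!Suc (i-1)" using nth[of i] nth[of "Suc i"] i by auto
      moreover have "Suc (i-1) < length A" using iA unfolding a_def by simp
      ultimately show ?thesis using acA by simp
    next
      case ia then show ?thesis using nth[of i] nth[of "Suc i"] i a0 a1(2) lastA by simp
    next
      case ix then show ?thesis using nth[of i] nth[of "Suc i"] i a0 a1(3) hdB by simp
    next
      case iB
      have e: "Suc i - a - 2 = Suc (i-a-2)" using iB by simp
      have "cs!i = B!(i-a-2)" using nth[of i] i iB by simp
      moreover have "cs!Suc i = B!(Suc i - a - 2)" using nth[of "Suc i"] i iB by simp
      ultimately have "cs!i = B!(i-a-2)" "cs!Suc i = B!Suc (i-a-2)" using e by simp_all
      moreover have "Suc (i-a-2) < length B" using iB i n by linarith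
      ultimately show ?thesis using acB by simp
    qed
  qed
  have wrap: "adjw w t (cs!(n-1)) (cs!0)"
  proof -
    have "cs!(n-1) = B!(length B - 1)" using nth[of "n-1"] n b0 by simp
    moreover have "cs!0 = s" unfolding cs_def by simp
    ultimately show ?thesis using a1(4) lastB by simp
  qed
  have clsf: "j = Suc i \<or> (i = 0 \<and> j = n - 1) \<or> (i = 0 \<and> j = Suc a)"
    if ij: "i < j" "j < n" and adj: "adjw w t (cs!i) (cs!j)" for i j
  proof -
    consider (i0) "i = 0" | (iA) "0 < i" "i \<le> a" | (ix) "i = Suc a" | (iB) "i > Suc a" by linarith
    then show ?thesis
    proof cases
      case i0
      then have ci: "cs!i = s" using nth[of i] ij by simp
      consider (jA) "j \<le> a" | (jx) "j = Suc a" | (jB) "j > Suc a" by linarith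
      then show ?thesis
      proof cases
        case jA
        then have "cs!j = A!(j-1)" using nth[of j] ij i0 by simp
        then have "adjw w t s (A!(j-1))" using adj ci by simp
        then have "\<not>(0 < j - 1 \<and> j - 1 < length A)" using n1 by blast
        then have "j = 1" using jA ij i0 unfolding a_def by linarith
        then show ?thesis using i0 by simp
      next
        case jx then show ?thesis using i0 by simp
      next
        case jB
        then have "cs!j = B!(j-a-2)" using nth[of j] ij by simp
        then have "adjw w t (B!(j-a-2)) s" using adj ci sym by simp
        then have "\<not>(Suc (j-a-2) < length B)" using n4 by blast
        then have "j = n - 1" using jB ij n by linarith
        then show ?thesis using i0 by simp
      qed
    next
      case iA
      then have ci: "cs!i = A!(i-1)" using nth[of i] ij by simp
      consider (jA) "j \<le> a" | (jx) "j = Suc a" | (jB) "j > Suc a" by linarith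
      then show ?thesis
      proof cases
        case jA
        then have "cs!j = A!(j-1)" using nth[of j] ij iA by simp
        then have "adjw w t (A!(i-1)) (A!(j-1))" using adj ci by simp
        then have "\<not>(Suc (i-1) < j-1 \<and> j-1 < length A)" using n5 by blast
        then have "j = Suc i" using jA ij iA unfolding a_def by linarith
        then show ?thesis by simp
      next
        case jx
        then have "cs!j = x" using nth[of j] ij by simp
        then have "adjw w t (A!(i-1)) x" using adj ci by simp
        then have "\<not>(Suc (i-1) < length A)" using n2 by blast
        then have "j = Suc i" using jx iA unfolding a_def by linarith
        then show ?thesis by simp
      next
        case jB
        then have "cs!j = B!(j-a-2)" using nth[of j] ij by simp
        moreover have "A!(i-1) \<in> set A" using iA unfolding a_def by simp
        moreover have "B!(j-a-2) \<in> set B" using jB ij n by simp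
        ultimately show ?thesis using adj ci nAB by auto
      qed
    next
      case ix
      then have ci: "cs!i = x" using nth[of i] ij by simp
      have jB: "j > Suc a" using ix ij by simp
      then have "cs!j = B!(j-a-2)" using nth[of j] ij by simp
      then have "adjw w t x (B!(j-a-2))" using adj ci by simp
      then have "\<not>(0 < j-a-2 \<and> j-a-2 < length B)" using n3 by blast
      then have "j = Suc i" using jB ij ix n by linarith
      then show ?thesis by simp
    next
      case iB
      then have ci: "cs!i = B!(i-a-2)" using nth[of i] ij by simp
      have "cs!j = B!(j-a-2)" using nth[of j] ij iB by simp
      then have "adjw w t (B!(i-a-2)) (B!(j-a-2))" using adj ci by simp
      then have "\<not>(Suc (i-a-2) < j-a-2 \<and> j-a-2 < length B)" using n6 by blast
      then have "j = Suc i" using iB ij n by linarith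
      then show ?thesis by simp
    qed
  qed
  have ce: "cyc_edge cs j = {cs!j, cs!Suc j}" if "Suc j < n" for j
    unfolding cyc_edge_def using that unfolding n_def by simp
  have ce_last: "cyc_edge cs (n-1) = {cs!(n-1), cs!0}"
    unfolding cyc_edge_def n_def using n unfolding n_def by simp
  have cyc: "is_cycle_Gt V w t cs"
    unfolding is_cycle_Gt_def
  proof (intro conjI allI impI)
    show "distinct cs" by fact
    show "3 \<le> length cs" using n a0 b0 unfolding n_def by simp
    fix j assume j: "j < length cs"
    show "in_Gt V w t (cyc_edge cs j)"
    proof (cases "Suc j < n")
      case True
      have "cs!j \<in> V" "cs!Suc j \<in> V" using inV True by auto
      then show ?thesis using ce[OF True] cons[OF True] in_Gt_iff[of "cs!j" V "cs!Suc j" w t] by simp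
    next
      case False
      then have "j = n - 1" using j unfolding n_def by simp
      moreover have "cs!(n-1) \<in> V" "cs!0 \<in> V" using inV n by auto
      ultimately show ?thesis using ce_last wrap in_Gt_iff[of "cs!(n-1)" V "cs!0" w t] by simp
    qed
  qed
  have wc: "well_covered_Gt V w t cs"
    unfolding well_covered_Gt_def
  proof (intro conjI allI impI)
    show "is_cycle_Gt V w t cs" by fact
    fix i j assume ch: "is_chord_Gt V w t cs i j"
    then have ij: "i < j" "j < n" and ing: "in_Gt V w t {cs!i, cs!j}"
      and nc: "{cs!i, cs!j} \<notin> cyc_edge cs ` {..<length cs}"
      unfolding is_chord_Gt_def n_def by auto
    have adj: "adjw w t (cs!i) (cs!j)" using in_Gt_adjw[OF ing] .
    have "\<not> (j = Suc i)"
    proof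
      assume "j = Suc i"
      then have "cyc_edge cs i = {cs!i, cs!j}" using ce[of i] ij by simp
      then show False using nc ij unfolding n_def by auto
    qed
    moreover have "\<not> (i = 0 \<and> j = n - 1)"
    proof
      assume "i = 0 \<and> j = n - 1"
      then have "cyc_edge cs (n-1) = {cs!i, cs!j}" using ce_last by (simp add: insert_commute)
      moreover have "n - 1 < length cs" using n unfolding n_def by simp
      ultimately show False using nc by auto
    qed
    ultimately have i0: "i = 0" and ja: "j = Suc a" using clsf[OF ij adj] by auto
    have csi: "cs!i = s" using i0 unfolding cs_def by simp
    have csj: "cs!j = x" using nth[of j] ij ja by simp
    have sx: "adjw w t s x" using adj csi csj by simp
    have cv: "w {s, hd A} \<le> w {s,x}" "w {last A, x} \<le> w {s,x}"
       "\<And>i. Suc i < length A \<Longrightarrow> w {A!i, A!Suc i} \<le> w {s,x}" using cov[OF sx] by auto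
    show "covers w cs i j"
      unfolding covers_def
    proof (rule disjI1, intro allI impI)
      fix k assume k: "i \<le> k \<and> k < j"
      then have k1: "Suc k < n" using ij by simp
      have "w (cyc_edge cs k) \<le> w {s,x}"
      proof -
        consider (k0) "k = 0" | (kA) "0 < k" "k < a" | (ka) "k = a" using k ja by linarith
        then show ?thesis
        proof cases
          case k0
          then have "cyc_edge cs k = {s, hd A}" using ce[OF k1] nth[of 1] k1 a0 hdA unfolding cs_def
            by simp
          then show ?thesis using cv by simp
        next
          case kA
          then have "cs!k = A!(k-1)" "cs!Suc k = A!Suc (k-1)" using nth[of k] nth[of "Suc k"] k1 by auto
          then have "cyc_edge cs k = {A!(k-1), A!Suc (k-1)}" using ce[OF k1] by simp
          moreover have "Suc (k-1) < length A" using kA unfolding a_def by simp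
          ultimately show ?thesis using cv(3) by simp
        next
          case ka
          then have "cs!k = A!(a-1)" "cs!Suc k = x" using nth[of k] nth[of "Suc k"] k1 a0 by auto
          then have "cyc_edge cs k = {last A, x}" using ce[OF k1] lastA by simp
          then show ?thesis using cv by simp
        qed
      qed
      then show "w (cyc_edge cs k) \<le> w {cs ! i, cs ! j}" using csi csj by simp
    qed
  qed
  have disjAB: "set A \<inter> set B = {}" using dist unfolding cs_def by auto
  have nonadj: "\<exists>y\<in>set cs. \<exists>z\<in>set cs. y \<noteq> z \<and> \<not> in_Gt V w t {y, z}"
  proof -
    have "hd A \<in> set A" "hd B \<in> set B" using ne by auto
    moreover have "\<not> adjw w t (hd A) (hd B)" using nAB ne by auto
    moreover have "\<not> in_Gt V w t {hd A, hd B}" using in_Gt_adjw[of V w t "hd A" "hd B"] \<open>\<not> adjw w t (hd A) (hd B)\<close> by blast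
    moreover have "hd A \<noteq> hd B" using disjAB \<open>hd A \<in> set A\<close> \<open>hd B \<in> set B\<close> by auto
    moreover have "hd A \<in> set cs" "hd B \<in> set cs" using \<open>hd A \<in> set A\<close> \<open>hd B \<in> set B\<close>
      unfolding cs_def by auto
    ultimately show ?thesis by blast
  qed
  have rr: "\<exists>z\<in>set cs. z \<noteq> r \<and> \<not> in_Gt V w t {r, z}"
  proof -
    obtain z where z: "z \<in> set A \<union> set B" "z \<noteq> r" "\<not> adjw w t r z" using rz(2) by blast
    have "z \<in> set cs" using z(1) unfolding cs_def by auto
    moreover have "\<not> in_Gt V w t {r, z}" using in_Gt_adjw[of V w t r z] z(3) by blast
    ultimately show ?thesis using z(2) by blast
  qed
  show ?thesis unfolding violated_cycle_Gt_def using wc nonadj rr by blast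
qed

lemma class_elem: "C \<in> PP (RL w t T) T \<Longrightarrow> p \<in> C \<Longrightarrow> C = cl (RL w t T) p"
proof -
  assume C: "C \<in> PP (RL w t T) T" and p: "p \<in> C"
  then obtain c where "c \<in> T" "C = cl (RL w t T) c" unfolding PP_def by auto
  then show ?thesis using cl_eq[OF RL_sym] p by metis
qed

lemma diff_class_nadj:
  assumes C1: "C1 \<in> PP (RL w t T) T" and C2: "C2 \<in> PP (RL w t T) T" and ne: "C1 \<noteq> C2"
    and p: "p \<in> C1" and q: "q \<in> C2"
  shows "\<not> adjw w t p q" and "p \<noteq> q"
proof -
  have e1: "C1 = cl (RL w t T) p" using class_elem[OF C1 p] .
  have e2: "C2 = cl (RL w t T) q" using class_elem[OF C2 q] .
  have pT: "p \<in> T" "q \<in> T" using PP_RL_sub C1 C2 p q by blast+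
  show "\<not> adjw w t p q"
  proof
    assume "adjw w t p q"
    then have "(p,q) \<in> RL w t T" using pT unfolding RL_def by simp
    then have "(p,q) \<in> (RL w t T)\<^sup>*" by simp
    then have "cl (RL w t T) p = cl (RL w t T) q" using cl_eq_iff[OF RL_sym, of w t T p q] by simp
    then show False using e1 e2 ne by simp
  qed
  show "p \<noteq> q" using e1 e2 ne by auto
qed

lemma class_vpath:
  assumes C: "C \<in> PP (RL w t T) T" and p: "p \<in> C" "adjw w t a p" and q: "q \<in> C" "adjw w t q b"
  shows "\<exists>P. vpath (adjw w t) a b C P"
proof -
  let ?R = "RL w t T"
  have e1: "C = cl ?R p" using class_elem[OF C p(1)] .
  have e2: "C = cl ?R q" using class_elem[OF C q(1)] .
  have "(p,q) \<in> ?R\<^sup>*" using e1 e2 cl_eq_iff[OF RL_sym, of w t T p q] by simp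
  from walk_exists[OF this] obtain xs where xs: "xs \<noteq> []" "hd xs = p" "last xs = q"
    "set xs \<subseteq> {z. (p,z) \<in> ?R\<^sup>*}" "\<forall>i. Suc i < length xs \<longrightarrow> (xs!i, xs!Suc i) \<in> ?R" by blast
  have "set xs \<subseteq> C" using xs(4) e1 unfolding cl_def by auto
  moreover have "\<forall>i. Suc i < length xs \<longrightarrow> adjw w t (xs!i) (xs!Suc i)" using xs(5) unfolding RL_def by auto
  ultimately have "vpath (adjw w t) a b C xs" unfolding vpath_def using xs p q by simp
  then show ?thesis by blast
qed

lemma class_ipath:
  assumes C: "C \<in> PP (RL w t T) T" and p: "p \<in> C" "adjw w t a p" and q: "q \<in> C" "adjw w t q b"
  shows "\<exists>P. vpath (adjw w t) a b C P \<and> distinct P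
     \<and> (\<forall>j. 0 < j \<and> j < length P \<longrightarrow> \<not> adjw w t a (P!j))
     \<and> (\<forall>j. Suc j < length P \<longrightarrow> \<not> adjw w t (P!j) b)
     \<and> (\<forall>i j. Suc i < j \<and> j < length P \<longrightarrow> \<not> adjw w t (P!i) (P!j))"
  using induced_path[OF class_vpath[OF assms]] .

lemma per_level_violation:
  assumes TV: "T \<subseteq> V" and rT: "r \<in> T" and sV: "s \<in> V" and xV: "x \<in> V"
    and sT: "s \<notin> T" and xT: "x \<notin> T" and sx: "s \<noteq> x"
    and C1: "C1 \<in> PP (RL w t T) T" and C2: "C2 \<in> PP (RL w t T) T" and C12: "C1 \<noteq> C2"
    and a1: "\<exists>c\<in>C1. adjw w t s c" "\<exists>c\<in>C1. adjw w t x c"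
    and a2: "\<exists>c\<in>C2. adjw w t s c" "\<exists>c\<in>C2. adjw w t x c"
    and yc: "adjw w t s x \<Longrightarrow> \<exists>y\<in>T. adjw w t y s \<and> adjw w t y x \<and> w {s,y} \<le> w {s,x} \<and> w {y,x} \<le> w {s,x}"
  shows "\<exists>cs. violated_cycle_Gt V r w t cs"
proof -
  have sub1: "C1 \<subseteq> T" using PP_RL_sub[OF C1] .
  have sub2: "C2 \<subseteq> T" using PP_RL_sub[OF C2] .
  have rV: "r \<in> V" using rT TV by auto
  have sym: "\<And>p q. adjw w t p q = adjw w t q p" by (rule adjw_sym)
  have disj12: "C1 \<inter> C2 = {}" using diff_class_nadj(2)[OF C1 C2 C12] by blast
  have rcl: "z \<noteq> r \<and> \<not> adjw w t r z" if C: "C \<in> PP (RL w t T) T" and z: "z \<in> C" and r: "r \<notin> C" for C z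
  proof -
    have Cr: "cl (RL w t T) r \<in> PP (RL w t T) T" using rT unfolding PP_def by simp
    have rr: "r \<in> cl (RL w t T) r" by (rule cl_mem)
    have "cl (RL w t T) r \<noteq> C" using r rr by auto
    then show ?thesis using diff_class_nadj[OF Cr C _ rr z] by simp
  qed
  show ?thesis
  proof (cases "adjw w t s x")
    case False
    obtain p1 where p1: "p1 \<in> C1" "adjw w t s p1" using a1(1) by blast
    obtain q1 where q1: "q1 \<in> C1" "adjw w t q1 x" using a1(2) sym by blast
    obtain p2 where p2: "p2 \<in> C2" "adjw w t x p2" using a2(2) by blast
    obtain q2 where q2: "q2 \<in> C2" "adjw w t q2 s" using a2(1) sym by blast
    obtain A where A: "vpath (adjw w t) s x C1 A" "distinct A"
      "\<forall>j. 0 < j \<and> j < length A \<longrightarrow> \<not> adjw w t s (A!j)"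
      "\<forall>j. Suc j < length A \<longrightarrow> \<not> adjw w t (A!j) x"
      "\<forall>i j. Suc i < j \<and> j < length A \<longrightarrow> \<not> adjw w t (A!i) (A!j)"
      using class_ipath[OF C1 p1 q1] by blast
    obtain B where B: "vpath (adjw w t) x s C2 B" "distinct B"
      "\<forall>j. 0 < j \<and> j < length B \<longrightarrow> \<not> adjw w t x (B!j)"
      "\<forall>j. Suc j < length B \<longrightarrow> \<not> adjw w t (B!j) s"
      "\<forall>i j. Suc i < j \<and> j < length B \<longrightarrow> \<not> adjw w t (B!i) (B!j)"
      using class_ipath[OF C2 p2 q2] by blast
    have Av: "A \<noteq> []" "set A \<subseteq> C1" "adjw w t s (hd A)" "adjw w t (last A) x"
      "\<forall>i. Suc i < length A \<longrightarrow> adjw w t (A!i) (A!Suc i)" using A(1) unfolding vpath_def by auto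
    have Bv: "B \<noteq> []" "set B \<subseteq> C2" "adjw w t x (hd B)" "adjw w t (last B) s"
      "\<forall>i. Suc i < length B \<longrightarrow> adjw w t (B!i) (B!Suc i)" using B(1) unfolding vpath_def by auto
    have AB: "set A \<inter> set B = {}" using Av(2) Bv(2) disj12 by blast
    have dist: "distinct (s # A @ x # B)"
      using A(2) B(2) AB sT xT sx Av(2) Bv(2) sub1 sub2 by auto
    have nAB: "\<forall>p\<in>set A. \<forall>q\<in>set B. \<not> adjw w t p q"
      using diff_class_nadj(1)[OF C1 C2 C12] Av(2) Bv(2) by blast
    have rz: "\<exists>z \<in> set A \<union> set B. z \<noteq> r \<and> \<not> adjw w t r z"
    proof (cases "r \<in> C1")
      case True
      then have "r \<notin> C2" using disj12 by auto
      moreover have "hd B \<in> C2" using Bv(1,2) by auto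
      ultimately have "hd B \<noteq> r \<and> \<not> adjw w t r (hd B)" using rcl[OF C2] by blast
      moreover have "hd B \<in> set B" using Bv(1) by simp
      ultimately show ?thesis by blast
    next
      case False
      moreover have "hd A \<in> C1" using Av(1,2) by auto
      ultimately have "hd A \<noteq> r \<and> \<not> adjw w t r (hd A)" using rcl[OF C1] by blast
      moreover have "hd A \<in> set A" using Av(1) by simp
      ultimately show ?thesis by blast
    qed
    have "violated_cycle_Gt V r w t (s # A @ x # B)"
      by (rule violated_from_cycle[OF sV xV _ _ dist Av(1) Bv(1) Av(3) Av(4) Bv(3) Bv(4) Av(5) Bv(5)
            A(3) A(4) B(3) B(4) A(5) B(5) nAB _ rV rz])
         (use Av(2) Bv(2) sub1 sub2 TV False in auto)
    then show ?thesis by blast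
  next
    case True
    obtain y where y: "y \<in> T" "adjw w t y s" "adjw w t y x" "w {s,y} \<le> w {s,x}" "w {y,x} \<le> w {s,x}"
      using yc[OF True] by blast
    define Cy where "Cy = cl (RL w t T) y"
    have Cy: "Cy \<in> PP (RL w t T) T" unfolding Cy_def PP_def using y(1) by simp
    have yCy: "y \<in> Cy" unfolding Cy_def by (rule cl_mem)
    obtain C' where C': "C' \<in> PP (RL w t T) T" "C' \<noteq> Cy" "\<exists>c\<in>C'. adjw w t s c" "\<exists>c\<in>C'. adjw w t x c"
      using C1 C2 C12 a1 a2 by metis
    obtain p2 where p2: "p2 \<in> C'" "adjw w t x p2" using C'(4) by blast
    obtain q2 where q2: "q2 \<in> C'" "adjw w t q2 s" using C'(3) sym by blast
    obtain B where B: "vpath (adjw w t) x s C' B" "distinct B"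
      "\<forall>j. 0 < j \<and> j < length B \<longrightarrow> \<not> adjw w t x (B!j)"
      "\<forall>j. Suc j < length B \<longrightarrow> \<not> adjw w t (B!j) s"
      "\<forall>i j. Suc i < j \<and> j < length B \<longrightarrow> \<not> adjw w t (B!i) (B!j)"
      using class_ipath[OF C'(1) p2 q2] by blast
    have Bv: "B \<noteq> []" "set B \<subseteq> C'" "adjw w t x (hd B)" "adjw w t (last B) s"
      "\<forall>i. Suc i < length B \<longrightarrow> adjw w t (B!i) (B!Suc i)" using B(1) unfolding vpath_def by auto
    have subC': "C' \<subseteq> T" using PP_RL_sub[OF C'(1)] .
    have yB: "\<forall>q\<in>set B. \<not> adjw w t y q \<and> y \<noteq> q"
      using diff_class_nadj[OF Cy C'(1) C'(2)[symmetric] yCy] Bv(2) by blast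
    have dist: "distinct (s # [y] @ x # B)"
      using B(2) yB sT xT sx Bv(2) subC' y(1) by auto
    have nAB: "\<forall>p\<in>set [y]. \<forall>q\<in>set B. \<not> adjw w t p q" using yB by simp
    have rz: "\<exists>z \<in> set [y] \<union> set B. z \<noteq> r \<and> \<not> adjw w t r z"
    proof (cases "r \<in> C'")
      case True
      then have "r \<notin> Cy" using diff_class_nadj(2)[OF Cy C'(1) C'(2)[symmetric]] by blast
      then show ?thesis using rcl[OF Cy yCy] by auto
    next
      case False
      moreover have "hd B \<in> C'" using Bv(1,2) by auto
      ultimately have "hd B \<noteq> r \<and> \<not> adjw w t r (hd B)" using rcl[OF C'(1)] by blast
      moreover have "hd B \<in> set B" using Bv(1) by simp
      ultimately show ?thesis by blast
    qed
    have "violated_cycle_Gt V r w t (s # [y] @ x # B)"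
      by (rule violated_from_cycle[OF sV xV _ _ dist _ Bv(1) _ _ Bv(3) Bv(4) _ Bv(5)
            _ _ B(3) B(4) _ B(5) nAB _ rV rz])
         (use Bv(2) subC' TV y sym in auto)
    then show ?thesis by blast
  qed
qed

lemma sum_nonpos_weighted:
  assumes "finite A" "\<And>t. t \<in> A \<Longrightarrow> d t > 0" "\<And>t. t \<in> A \<Longrightarrow> g t \<le> (0::int)"
  shows "(\<Sum>t\<in>A. d t * real_of_int (g t)) \<le> (0::real)"
proof (rule sum_nonpos)
  fix t assume "t \<in> A"
  then have "d t \<ge> 0" "real_of_int (g t) \<le> 0" using assms(2,3) by force+
  then show "d t * real_of_int (g t) \<le> 0" by (rule mult_nonneg_nonpos)
qed

lemma main_ind:
  fixes N :: "'a set" and r :: 'a and w :: "'a set \<Rightarrow> real"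
  assumes finN: "finite N" and rN: "r \<notin> N"
    and no_viol: "\<forall>t \<in> w ` cedges (insert r N). t < Max (w ` cedges (insert r N)) \<longrightarrow>
                   \<not> (\<exists>cs. violated_cycle_Gt (insert r N) r w t cs)"
    and nonneg: "\<forall>x y. candidate_edge N r w x y \<longrightarrow> f_uv w x y (Nhat (insert r N) w x y) \<ge> 0"
  shows "candidate_edge N r w u v \<Longrightarrow> r \<in> S \<Longrightarrow> S \<subseteq> insert r N \<Longrightarrow> u \<notin> S \<Longrightarrow> v \<notin> S
     \<Longrightarrow> s \<in> S \<Longrightarrow> s \<noteq> r \<Longrightarrow> s \<in> Nhat (insert r N) w u v \<Longrightarrow> f_uv w u v S \<le> f_uv w u v (S - {s})"
proof (induction "card {e \<in> cedges (insert r N). w e > w {u,v}}" arbitrary: u v S s rule: less_induct)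
  case less
  define V where "V = insert r N"
  define W where "W = w ` cedges V"
  define W' where "W' = {t\<in>W. t < Max W}"
  have cand: "candidate_edge N r w u v" and rS: "r \<in> S" and SV: "S \<subseteq> V" and uS: "u \<notin> S"
    and vS: "v \<notin> S" and sS: "s \<in> S" and sr: "s \<noteq> r" and sN: "s \<in> Nhat V w u v"
    using less.prems unfolding V_def by auto
  have uN: "u \<in> N" and vN: "v \<in> N" and uv: "u \<noteq> v" and rNh: "r \<in> Nhat V w u v"
    using cand unfolding candidate_edge_def V_def by auto
  have finV: "finite V" using finN unfolding V_def by simp
  have uV: "u \<in> V" and vV: "v \<in> V" using uN vN unfolding V_def by auto
  have "{u,v} \<in> cedges V" using uV vV uv by (simp add: cedges_iff)
  then have Wne: "W \<noteq> {}" unfolding W_def by auto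
  have finW: "finite W" using cedges_finite[OF finV] unfolding W_def by simp
  define T where "T = S - {s}"
  have ST: "S = insert s T" and sT: "s \<notin> T" using sS unfolding T_def by auto
  have rT: "r \<in> T" using rS sr unfolding T_def by auto
  have TV: "T \<subseteq> V" using SV unfolding T_def by auto
  have uT: "u \<notin> T" and vT: "v \<notin> T" using uS vS unfolding T_def by auto
  have finT: "finite T" using finite_subset[OF TV finV] .
  have sV: "s \<in> V" using sS SV by auto
  have sNN: "s \<in> N" using sV sr unfolding V_def by auto
  have su: "s \<noteq> u" and sv: "s \<noteq> v" using sS uS vS by auto
  have smax: "max (w {s,u}) (w {s,v}) > w {u,v}" using sN unfolding Nhat_def by simp
  obtain x ov where xo: "(x = u \<and> ov = v) \<or> (x = v \<and> ov = u)" and wo: "w {s,ov} \<le> w {s,x}"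
    and wx: "w {s,x} > w {u,v}"
  proof (cases "w {s,u} \<ge> w {s,v}")
    case True then show ?thesis using that[of u v] smax by (simp add: max_def)
  next
    case False then show ?thesis using that[of v u] smax by (simp add: max_def)
  qed
  have xoe: "{x,ov} = {u,v}" using xo by auto
  have xN: "x \<in> N" and xV: "x \<in> V" and oV: "ov \<in> V" using xo uN vN uV vV by auto
  have xS: "x \<notin> S" and oS: "ov \<notin> S" and xT: "x \<notin> T" and oT: "ov \<notin> T" using xo uS vS uT vT by auto
  have sx: "s \<noteq> x" and so: "s \<noteq> ov" and xo_ne: "x \<noteq> ov" using xo su sv uv by auto
  have wxo: "w {x,ov} = w {u,v}" using xoe by simp
  show ?case
  proof (cases "T \<subseteq> Nhat V w s x")
    case True
    let ?Nh = "Nhat V w s x"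
    have candsx: "candidate_edge N r w s x"
      unfolding candidate_edge_def using sNN xN sx True rT unfolding V_def by auto
    have mu: "card {e \<in> cedges (insert r N). w e > w {s,x}} < card {e \<in> cedges (insert r N). w e > w {u,v}}"
    proof (rule psubset_card_mono)
      show "finite {e \<in> cedges (insert r N). w e > w {u,v}}" using cedges_finite[OF finV] unfolding V_def by simp
      have "{s,x} \<in> cedges (insert r N)" using sV xV sx unfolding V_def by (simp add: cedges_iff)
      then show "{e \<in> cedges (insert r N). w e > w {s,x}} \<subset> {e \<in> cedges (insert r N). w e > w {u,v}}"
        using wx by force
    qed
    have NhV: "?Nh \<subseteq> V" unfolding Nhat_def by auto
    have sNh: "s \<notin> ?Nh" and xNh: "x \<notin> ?Nh" unfolding Nhat_def by auto
    have finNh: "finite ?Nh" using finite_subset[OF NhV finV] .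
    have chain: "\<forall>T'. card (?Nh - T') = k \<longrightarrow> T \<subseteq> T' \<longrightarrow> T' \<subseteq> ?Nh \<longrightarrow> f_uv w s x ?Nh \<le> f_uv w s x T'" for k
    proof (induction k)
      case 0
      show ?case
      proof (intro allI impI)
        fix T' assume "card (?Nh - T') = 0" "T \<subseteq> T'" "T' \<subseteq> ?Nh"
        then have "T' = ?Nh" using finNh by auto
        then show "f_uv w s x ?Nh \<le> f_uv w s x T'" by simp
      qed
    next
      case (Suc m)
      show ?case
      proof (intro allI impI)
        fix T' assume c: "card (?Nh - T') = Suc m" and TT': "T \<subseteq> T'" and T'N: "T' \<subseteq> ?Nh"
        then obtain z where z: "z \<in> ?Nh" "z \<notin> T'" by (metis Diff_eq_empty_iff card_0_eq finNh finite_Diff nat.distinct(1) subsetI)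
        define T'' where "T'' = insert z T'"
        have c2: "card (?Nh - T'') = m"
        proof -
          have "?Nh - T' = insert z (?Nh - T'')" using z unfolding T''_def by auto
          moreover have "z \<notin> ?Nh - T''" unfolding T''_def by simp
          ultimately show ?thesis using c finNh by simp
        qed
        have T1: "T \<subseteq> T''" "T'' \<subseteq> ?Nh" using TT' T'N z unfolding T''_def by auto
        have IH1: "f_uv w s x ?Nh \<le> f_uv w s x T''"
          using Suc.IH c2 T1 by blast
        have "f_uv w s x T'' \<le> f_uv w s x (T'' - {z})"
        proof (rule less.hyps[OF mu candsx])
          show "r \<in> T''" using rT TT' unfolding T''_def by auto
          show "T'' \<subseteq> insert r N" using T'N z NhV unfolding T''_def V_def by auto
          show "s \<notin> T''" using T'N z sNh unfolding T''_def by auto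
          show "x \<notin> T''" using T'N z xNh unfolding T''_def by auto
          show "z \<in> T''" unfolding T''_def by simp
          show "z \<noteq> r" using z rT TT' by auto
          show "z \<in> Nhat (insert r N) w s x" using z unfolding V_def by simp
        qed
        moreover have "T'' - {z} = T'" using z unfolding T''_def by auto
        ultimately show "f_uv w s x ?Nh \<le> f_uv w s x T'" using IH1 by simp
      qed
    qed
    have fT: "f_uv w s x T \<ge> 0"
    proof -
      have "f_uv w s x ?Nh \<le> f_uv w s x T" using chain[of "card (?Nh - T)"] True by simp
      moreover have "f_uv w s x ?Nh \<ge> 0" using nonneg candsx unfolding V_def by blast
      ultimately show ?thesis by simp
    qed
    have fo: "f_uv w s x (insert ov T) \<le> 0"
    proof -
      have X: "insert ov T \<subseteq> V" "insert ov T \<noteq> {}" using TV oV by auto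
      have "f_uv w s x (insert ov T) = (\<Sum>t\<in>W'. (nxt W t - t) * real_of_int (gg w t s x (insert ov T)))"
        unfolding W'_def
        by (rule f_formula[OF finV X(1) X(2) W_def Wne sV _ xV _ sx]) (use so sT xo_ne xT in auto)
      also have "\<dots> \<le> 0"
      proof (rule sum_nonpos_weighted)
        show "finite W'" using finW unfolding W'_def by simp
        fix t assume t: "t \<in> W'"
        show "nxt W t - t > 0" using nxt_gt[OF finW] t unfolding W'_def by auto
        have finX: "finite (insert ov T)" using finT by simp
        have sX: "s \<notin> insert ov T" and xX: "x \<notin> insert ov T" using sT so xT xo_ne by auto
        show "gg w t s x (insert ov T) \<le> 0"
        proof (cases "adjw w t s x")
          case False
          then show ?thesis using gg_nonpos_nadj[OF finX sX xX sx] by simp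
        next
          case True
          then have "w {s,x} \<le> t" unfolding adjw_def by simp
          then have "adjw w t s ov" "adjw w t x ov" using wo wxo wx so xo_ne unfolding adjw_def by auto
          then show ?thesis using gg_nonpos_common[OF finX sX xX sx, of ov] by simp
        qed
      qed
      finally show ?thesis .
    qed
    have ID: "f_uv w u v (insert s T) - f_uv w u v T = f_uv w s x (insert ov T) - f_uv w s x T"
      using xo by (auto simp: f_uv_def insert_commute)
    show ?thesis using ID fT fo unfolding ST by (simp add: sT)
  next
    case False
    then obtain y where yT: "y \<in> T" and yN: "y \<notin> Nhat V w s x" by blast
    have yV: "y \<in> V" using yT TV by auto
    have ys: "y \<noteq> s" and yx: "y \<noteq> x" using yT sT xT by auto
    have yw: "w {y,s} \<le> w {s,x}" "w {y,x} \<le> w {s,x}" using yN yV ys yx unfolding Nhat_def by auto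
    have S1: "S \<subseteq> V" "S \<noteq> {}" using SV sS by auto
    have T1: "T \<subseteq> V" "T \<noteq> {}" using TV rT by auto
    have fS: "f_uv w u v S = (\<Sum>t\<in>W'. (nxt W t - t) * real_of_int (gg w t u v S))"
      unfolding W'_def by (rule f_formula[OF finV S1 W_def Wne uV uS vV vS uv])
    have fT: "f_uv w u v T = (\<Sum>t\<in>W'. (nxt W t - t) * real_of_int (gg w t u v T))"
      unfolding W'_def by (rule f_formula[OF finV T1 W_def Wne uV uT vV vT uv])
    have lev: "gg w t u v (insert s T) \<le> gg w t u v T" if t: "t \<in> W'" for t
    proof (rule gg_mono[OF finT sT uT vT su sv uv])
      let ?Q = "MM w t T u v \<inter> Acl w t T s"
      show "card ?Q \<le> 1"
      proof (rule ccontr)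
        assume "\<not> card ?Q \<le> 1"
        moreover have "finite ?Q" using MM_finite[OF finT] by simp
        ultimately obtain C1 C2 where C: "C1 \<in> ?Q" "C2 \<in> ?Q" "C1 \<noteq> C2"
          using card_le_Suc0_iff_eq[of ?Q] by auto
        have CP: "C1 \<in> PP (RL w t T) T" "C2 \<in> PP (RL w t T) T" using C unfolding MM_def Acl_def by auto
        have as: "\<exists>c\<in>C1. adjw w t s c" "\<exists>c\<in>C2. adjw w t s c" using C unfolding Acl_def by auto
        have ax: "\<exists>c\<in>C1. adjw w t x c" "\<exists>c\<in>C2. adjw w t x c" using C xo unfolding MM_def Acl_def by auto
        have yc: "\<exists>y\<in>T. adjw w t y s \<and> adjw w t y x \<and> w {s,y} \<le> w {s,x} \<and> w {y,x} \<le> w {s,x}"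
          if "adjw w t s x"
        proof -
          have "w {s,x} \<le> t" using that unfolding adjw_def by simp
          then have "adjw w t y s" "adjw w t y x" using yw ys yx unfolding adjw_def by auto
          moreover have "w {s,y} \<le> w {s,x}" using yw by (simp add: insert_commute)
          ultimately show ?thesis using yT yw by blast
        qed
        have "\<exists>cs. violated_cycle_Gt V r w t cs"
          by (rule per_level_violation[OF TV rT sV xV sT xT sx CP(1) CP(2) C(3) as(1) ax(1) as(2) ax(2) yc])
        moreover have "t \<in> w ` cedges (insert r N)" "t < Max (w ` cedges (insert r N))"
          using t unfolding W'_def W_def V_def by auto
        ultimately show False using no_viol unfolding V_def by blast
      qed
    qed
    have "f_uv w u v S \<le> f_uv w u v T"
      unfolding fS fT
    proof (rule sum_mono)
      fix t assume t: "t \<in> W'"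
      have "nxt W t - t > 0" using nxt_gt[OF finW] t unfolding W'_def by auto
      then show "(nxt W t - t) * real_of_int (gg w t u v S) \<le> (nxt W t - t) * real_of_int (gg w t u v T)"
        using lev[OF t] ST by (simp add: mult_left_mono)
    qed
    then show ?thesis unfolding T_def .
  qed
qed

theorem lemma6:
  fixes N :: "'a set" and r :: 'a and w :: "'a set \<Rightarrow> real"
  assumes "finite N" and "r \<notin> N"
    and no_viol: "\<forall>t \<in> w ` cedges (insert r N). t < Max (w ` cedges (insert r N)) \<longrightarrow>
                   \<not> (\<exists>cs. violated_cycle_Gt (insert r N) r w t cs)"
    and nonneg: "\<forall>x y. candidate_edge N r w x y \<longrightarrow> f_uv w x y (Nhat (insert r N) w x y) \<ge> 0"
    and cand: "candidate_edge N r w u v"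
    and "r \<in> S" and "u \<notin> S" and "v \<notin> S"
    and "S \<subseteq> Nhat (insert r N) w u v"
    and "s \<in> S - {r}"
  shows "f_uv w u v S \<le> f_uv w u v (S - {s})"
proof -
  have "Nhat (insert r N) w u v \<subseteq> insert r N" unfolding Nhat_def by auto
  then have "S \<subseteq> insert r N" using assms(9) by auto
  then show ?thesis
    using main_ind[OF assms(1,2) no_viol nonneg cand assms(6)] assms by auto
qed

end
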